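(* Let $\Bbbk$ be algebraically closed, $R$ a commutative noetherian domain with field of fractions $K$ of transcendence degree $d=\operatorname{trdeg}(K/\Bbbk)<\infty$, $\sigma\in\operatorname{Aut}_\Bbbk(R)$ locally algebraic, $H,J$ ideals of $R$, and $B=R(t,\sigma,H,J)$. Then the Gelfand–Kirillov dimension of $B$ is $d+1$.
   Context: $\Bbbk$ is a field; all algebras are associative unital $\Bbbk$-algebras. For an algebra $R$ and $\sigma\in\operatorname{Aut}_\Bbbk(R)$, $R[t,t^{-1};\sigma]$ is the skew Laurent ring: generated over $R$ by $t,t^{-1}$ with $tt^{-1}=t^{-1}t=1$ and $t^{\pm1}r=\sigma^{\pm1}(r)t^{\pm1}$ for $r\in R$. Given two-sided ideals $H,J$ of $R$, set $I^{(0)}=R$, $I^{(n)}=J\sigma(J)\cdots\sigma^{n-1}(J)$ for $n\ge1$, and $I^{(n)}=\sigma^{-1}(H)\sigma^{-2}(H)\cdots\sigma^{n}(H)$ for $n\le-1$; it is assumed throughout that $I^{(n)}\neq0$ for all $n\in\mathbb Z$. The Bell–Rogalski (BR) algebra is $R(t,\sigma,H,J)=\bigoplus_{n\in\mathbb Z}I^{(n)}t^n\subseteq R[t,t^{-1};\sigma]$. An automorphism $\sigma$ is locally algebraic if for each $r\in R$ the set $\{\sigma^n(r):n\in\mathbb Z\}$ is contained in a finite-dimensional $\Bbbk$-subspace of $R$. *)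

theory Defs
  imports Main "HOL-Computational_Algebra.Polynomial" "HOL-Computational_Algebra.Fraction_Field"
    "HOL-Library.Function_Algebras" "HOL-Library.Extended_Real" "HOL-Library.Liminf_Limsup"
begin

definition alg_closed :: "'k::field itself \<Rightarrow> bool" where
  "alg_closed (T::'k itself) \<longleftrightarrow> (\<forall>p::'k poly. degree p > 0 \<longrightarrow> (\<exists>x. poly p x = 0))"

text \<open>A k-algebra structure on a ring 'r is given by a unital ring homomorphism
  iota : k -> R (structure map); the scalar action is c.x = iota c * x.\<close>
definition kalg_hom :: "('k::field \<Rightarrow> 'r::comm_ring_1) \<Rightarrow> bool" where
  "kalg_hom \<iota> \<longleftrightarrow> \<iota> 1 = 1 \<and> (\<forall>a b. \<iota> (a + b) = \<iota> a + \<iota> b) \<and> (\<forall>a b. \<iota> (a * b) = \<iota> a * \<iota> b)"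

definition kscale :: "('k::field \<Rightarrow> 'r::comm_ring_1) \<Rightarrow> 'k \<Rightarrow> 'r \<Rightarrow> 'r" where
  "kscale \<iota> c x = \<iota> c * x"

definition is_ideal :: "'r::comm_ring_1 set \<Rightarrow> bool" where
  "is_ideal I \<longleftrightarrow> 0 \<in> I \<and> (\<forall>x\<in>I. \<forall>y\<in>I. x + y \<in> I) \<and> (\<forall>r. \<forall>x\<in>I. r * x \<in> I)"

definition noetherian_ring :: "'r::comm_ring_1 itself \<Rightarrow> bool" where
  "noetherian_ring (T::'r itself) \<longleftrightarrow>
     (\<forall>C::nat \<Rightarrow> 'r set. (\<forall>n. is_ideal (C n)) \<and> (\<forall>n. C n \<subseteq> C (Suc n)) \<longrightarrow> (\<exists>m. \<forall>n\<ge>m. C n = C m))"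

text \<open>Monomials are exponent vectors e : F -> nat
  supported in S.\<close>
definition alg_indep :: "('k::field \<Rightarrow> 'f::field) \<Rightarrow> 'f set \<Rightarrow> bool" where
  "alg_indep \<phi> S \<longleftrightarrow> finite S \<and>
     (\<forall>(E::('f \<Rightarrow> nat) set) (c::('f \<Rightarrow> nat) \<Rightarrow> 'k).
        finite E \<and> (\<forall>e\<in>E. \<forall>x. x \<notin> S \<longrightarrow> e x = 0) \<and>
        (\<Sum>e\<in>E. \<phi> (c e) * (\<Prod>x\<in>S. x ^ e x)) = 0
        \<longrightarrow> (\<forall>e\<in>E. c e = 0))"

definition trdeg_eq :: "('k::field \<Rightarrow> 'f::field) \<Rightarrow> nat \<Rightarrow> bool" where
  "trdeg_eq \<phi> d \<longleftrightarrow> (\<exists>S. alg_indep \<phi> S \<and> card S = d \<and> (\<forall>y. y \<notin> S \<longrightarrow> \<not> alg_indep \<phi> (insert y S)))"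

definition frac_emb :: "('k::field \<Rightarrow> 'r::idom) \<Rightarrow> 'k \<Rightarrow> 'r fract" where
  "frac_emb \<iota> c = Fract (\<iota> c) 1"

definition k_aut :: "('k::field \<Rightarrow> 'r::comm_ring_1) \<Rightarrow> ('r \<Rightarrow> 'r) \<Rightarrow> bool" where
  "k_aut \<iota> \<sigma> \<longleftrightarrow> bij \<sigma> \<and> \<sigma> 1 = 1 \<and> (\<forall>a b. \<sigma> (a + b) = \<sigma> a + \<sigma> b)
     \<and> (\<forall>a b. \<sigma> (a * b) = \<sigma> a * \<sigma> b) \<and> (\<forall>c x. \<sigma> (\<iota> c * x) = \<iota> c * \<sigma> x)"

definition zpow :: "('r \<Rightarrow> 'r) \<Rightarrow> int \<Rightarrow> 'r \<Rightarrow> 'r" where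
  "zpow \<sigma> n = (if 0 \<le> n then \<sigma> ^^ nat n else inv \<sigma> ^^ nat (- n))"

definition locally_algebraic :: "('k::field \<Rightarrow> 'r::comm_ring_1) \<Rightarrow> ('r \<Rightarrow> 'r) \<Rightarrow> bool" where
  "locally_algebraic \<iota> \<sigma> \<longleftrightarrow>
     (\<forall>r. \<exists>F. finite F \<and> (\<forall>n::int. zpow \<sigma> n r \<in> module.span (kscale \<iota>) F))"

text \<open>An element sum_n f(n) t^n is represented by its finitely supported coefficient
  function f : int -> R.  Addition is pointwise; the product uses
  (a t^i)(b t^j) = a sigma^i(b) t^(i+j).\<close>
definition sl_scale :: "('k::field \<Rightarrow> 'r::comm_ring_1) \<Rightarrow> 'k \<Rightarrow> (int \<Rightarrow> 'r) \<Rightarrow> (int \<Rightarrow> 'r)" where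
  "sl_scale \<iota> c f = (\<lambda>n. \<iota> c * f n)"

definition sl_mult :: "('r::comm_ring_1 \<Rightarrow> 'r) \<Rightarrow> (int \<Rightarrow> 'r) \<Rightarrow> (int \<Rightarrow> 'r) \<Rightarrow> (int \<Rightarrow> 'r)" where
  "sl_mult \<sigma> f g = (\<lambda>n. \<Sum>i\<in>{i. f i \<noteq> 0}. f i * zpow \<sigma> i (g (n - i)))"

definition sl_one :: "int \<Rightarrow> 'r::comm_ring_1" where
  "sl_one = (\<lambda>n. if n = 0 then 1 else 0)"

definition skew_laurent :: "(int \<Rightarrow> 'r::comm_ring_1) set" where
  "skew_laurent = {f. finite {n. f n \<noteq> 0}}"

definition ideal_prod :: "'r::comm_ring_1 set list \<Rightarrow> 'r set" where
  "ideal_prod Is = {sum_list (map prod_list xss) | xss. \<forall>xs\<in>set xss. list_all2 (\<in>) xs Is}"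

definition BR_I :: "('r::comm_ring_1 \<Rightarrow> 'r) \<Rightarrow> 'r set \<Rightarrow> 'r set \<Rightarrow> int \<Rightarrow> 'r set" where
  "BR_I \<sigma> H J n =
    (if n = 0 then UNIV
     else if 0 < n then ideal_prod (map (\<lambda>i. zpow \<sigma> (int i) ` J) [0..<nat n])
     else ideal_prod (map (\<lambda>i. zpow \<sigma> (- int i) ` H) [1..<nat (- n) + 1]))"

definition BR_alg :: "('r::comm_ring_1 \<Rightarrow> 'r) \<Rightarrow> 'r set \<Rightarrow> 'r set \<Rightarrow> (int \<Rightarrow> 'r) set" where
  "BR_alg \<sigma> H J = {f \<in> skew_laurent. \<forall>n. f n \<in> BR_I \<sigma> H J n}"

definition pow_space :: "('k::field \<Rightarrow> 'a::ab_group_add \<Rightarrow> 'a) \<Rightarrow> ('a \<Rightarrow> 'a \<Rightarrow> 'a) \<Rightarrow> 'a \<Rightarrow> 'a set \<Rightarrow> nat \<Rightarrow> 'a set" where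
  "pow_space sc mul one V m = module.span sc {foldr mul xs one | xs. length xs = m \<and> set xs \<subseteq> V}"

definition GKdim :: "('k::field \<Rightarrow> 'a::ab_group_add \<Rightarrow> 'a) \<Rightarrow> ('a \<Rightarrow> 'a \<Rightarrow> 'a) \<Rightarrow> 'a \<Rightarrow> 'a set \<Rightarrow> ereal" where
  "GKdim sc mul one A =
     (SUP F \<in> {F. finite F \<and> F \<subseteq> A}.
        limsup (\<lambda>m. ereal (ln (real (vector_space.dim sc (pow_space sc mul one (module.span sc (insert one F)) m)))
                          / ln (real m))))"

end

theory Submission
  imports Defs "HOL-Library.FuncSet"
begin
lemma kalg_hom_0: "kalg_hom \<phi> \<Longrightarrow> \<phi> 0 = 0"
  unfolding kalg_hom_def by (metis add_cancel_right_right add_0)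

lemma vs_kscale: "kalg_hom (\<phi>::'k::field \<Rightarrow> 'a::comm_ring_1) \<Longrightarrow> vector_space (kscale \<phi>)"
  unfolding vector_space_def kscale_def kalg_hom_def by (auto simp: algebra_simps)

lemma vs_sl: "kalg_hom (\<phi>::'k::field \<Rightarrow> 'a::comm_ring_1) \<Longrightarrow> vector_space (sl_scale \<phi>)"
  unfolding vector_space_def sl_scale_def kalg_hom_def by (auto simp: algebra_simps fun_eq_iff)

definition hm :: "('k::field \<Rightarrow> 'r::comm_ring_1) \<Rightarrow> ('r \<Rightarrow> 'r) \<Rightarrow> bool" where
  "hm \<iota> f \<longleftrightarrow> inj f \<and> f 1 = 1 \<and> (\<forall>a b. f (a + b) = f a + f b)
     \<and> (\<forall>a b. f (a * b) = f a * f b) \<and> (\<forall>c x. f (\<iota> c * x) = \<iota> c * f x)"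

lemma hm_0: "hm \<iota> f \<Longrightarrow> f 0 = 0"
  unfolding hm_def by (metis add_cancel_right_right add_0)

lemma hm_id: "hm \<iota> id" unfolding hm_def by auto

lemma hm_comp: assumes "hm \<iota> f" "hm \<iota> g" shows "hm \<iota> (f \<circ> g)"
proof -
  have "\<forall>c x. f (g (\<iota> c * x)) = \<iota> c * f (g x)" using assms unfolding hm_def by metis
  then show ?thesis using assms unfolding hm_def by (simp add: inj_compose)
qed

lemma hm_pow: "hm \<iota> f \<Longrightarrow> hm \<iota> (f ^^ n)"
  by (induction n) (auto simp: hm_id hm_comp)

lemma kaut_hm: "k_aut \<iota> \<sigma> \<Longrightarrow> hm \<iota> \<sigma>"
  unfolding k_aut_def hm_def by (auto simp: bij_def)

lemma kaut_inv_hm: assumes "k_aut \<iota> \<sigma>" shows "hm \<iota> (inv \<sigma>)"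
proof -
  have b: "bij \<sigma>" using assms by (simp add: k_aut_def)
  have s: "\<And>x. \<sigma> (inv \<sigma> x) = x" using b by (simp add: bij_is_surj surj_f_inv_f)
  have i: "\<And>x. inv \<sigma> (\<sigma> x) = x" using b by (simp add: bij_is_inj)
  have h: "hm \<iota> \<sigma>" using assms by (rule kaut_hm)
  show ?thesis unfolding hm_def
  proof (intro conjI allI)
    show "inj (inv \<sigma>)" using b by (simp add: bij_imp_bij_inv bij_is_inj)
    show "inv \<sigma> 1 = 1" using h i unfolding hm_def by metis
    show "inv \<sigma> (a + b) = inv \<sigma> a + inv \<sigma> b" for a b
      using h s i unfolding hm_def by metis
    show "inv \<sigma> (a * b) = inv \<sigma> a * inv \<sigma> b" for a b
      using h s i unfolding hm_def by metis
    show "inv \<sigma> (\<iota> c * x) = \<iota> c * inv \<sigma> x" for c x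
      using h s i unfolding hm_def by metis
  qed
qed

lemma zpow_hm: assumes "k_aut \<iota> \<sigma>" shows "hm \<iota> (zpow \<sigma> n)"
  using hm_pow[OF kaut_hm[OF assms]] hm_pow[OF kaut_inv_hm[OF assms]] by (simp add: zpow_def)

lemma zpow_0[simp]: "zpow \<sigma> 0 = id" by (simp add: zpow_def)
lemma zpow_1[simp]: "zpow \<sigma> 1 = \<sigma>" by (simp add: zpow_def)

lemma zpow_succ: assumes "k_aut \<iota> \<sigma>" shows "zpow \<sigma> (n + 1) x = \<sigma> (zpow \<sigma> n x)"
proof -
  have b: "bij \<sigma>" using assms by (simp add: k_aut_def)
  have s: "\<And>x. \<sigma> (inv \<sigma> x) = x" using b by (simp add: bij_is_surj surj_f_inv_f)
  show ?thesis
  proof (cases "0 \<le> n")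
    case True
    then have "nat (n+1) = Suc (nat n)" by simp
    then show ?thesis using True by (simp add: zpow_def)
  next
    case False
    then have "nat (- n) = Suc (nat (- (n+1)))" by simp
    then show ?thesis using False s by (simp add: zpow_def)
  qed
qed

lemma zpow_pred: assumes "k_aut \<iota> \<sigma>" shows "zpow \<sigma> (n - 1) x = inv \<sigma> (zpow \<sigma> n x)"
proof -
  have b: "bij \<sigma>" using assms by (simp add: k_aut_def)
  have i: "\<And>x. inv \<sigma> (\<sigma> x) = x" using b by (simp add: bij_is_inj)
  have "zpow \<sigma> n x = zpow \<sigma> ((n - 1) + 1) x" by simp
  also have "\<dots> = \<sigma> (zpow \<sigma> (n - 1) x)" by (rule zpow_succ[OF assms])
  finally show ?thesis using i by simp
qed

lemma zpow_add: assumes "k_aut \<iota> \<sigma>" shows "zpow \<sigma> i (zpow \<sigma> j x) = zpow \<sigma> (i + j) x"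
proof (induction i rule: int_induct[where k=0])
  case base then show ?case by simp
next
  case (step1 i)
  have "zpow \<sigma> (i + 1) (zpow \<sigma> j x) = \<sigma> (zpow \<sigma> i (zpow \<sigma> j x))" by (rule zpow_succ[OF assms])
  also have "\<dots> = \<sigma> (zpow \<sigma> (i + j) x)" using step1 by simp
  also have "\<dots> = zpow \<sigma> (i + j + 1) x" by (rule zpow_succ[OF assms, symmetric])
  finally show ?case by (simp add: algebra_simps)
next
  case (step2 i)
  have "zpow \<sigma> (i - 1) (zpow \<sigma> j x) = inv \<sigma> (zpow \<sigma> i (zpow \<sigma> j x))" by (rule zpow_pred[OF assms])
  also have "\<dots> = inv \<sigma> (zpow \<sigma> (i + j) x)" using step2 by simp
  also have "\<dots> = zpow \<sigma> (i + j - 1) x" by (rule zpow_pred[OF assms, symmetric])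
  finally show ?case by (simp add: algebra_simps)
qed

definition smono :: "'r::zero \<Rightarrow> int \<Rightarrow> int \<Rightarrow> 'r" where
  "smono a i = (\<lambda>n. if n = i then a else 0)"

lemma sl_one_mono: "sl_one = smono 1 0" unfolding sl_one_def smono_def by auto

lemma sl_mult_mono_left:
  assumes "hm \<iota> (zpow \<sigma> i)"
  shows "sl_mult \<sigma> (smono a i) g = (\<lambda>n. a * zpow \<sigma> i (g (n - i)))"
proof (cases "a = 0")
  case True then show ?thesis by (simp add: sl_mult_def smono_def)
next
  case False
  then have "{j. smono a i j \<noteq> 0} = {i}" by (auto simp: smono_def)
  then show ?thesis by (simp add: sl_mult_def smono_def)
qed

lemma sl_mult_mono:
  assumes "k_aut \<iota> \<sigma>"
  shows "sl_mult \<sigma> (smono a i) (smono b j) = smono (a * zpow \<sigma> i b) (i + j)"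
proof -
  have "sl_mult \<sigma> (smono a i) (smono b j) = (\<lambda>n. a * zpow \<sigma> i (smono b j (n - i)))"
    by (rule sl_mult_mono_left[OF zpow_hm[OF assms]])
  also have "\<dots> = smono (a * zpow \<sigma> i b) (i + j)"
    using hm_0[OF zpow_hm[OF assms, of i]] by (auto simp: smono_def fun_eq_iff)
  finally show ?thesis .
qed

context fixes \<phi> :: "'k::field \<Rightarrow> 'a::comm_ring_1" assumes h\<phi>: "kalg_hom \<phi>"
begin

interpretation V: vector_space "kscale \<phi>" by (rule vs_kscale[OF h\<phi>])

lemma span_mult_left:
  assumes "\<forall>b\<in>Y. a * b \<in> module.span (kscale \<phi>) Z" "b \<in> module.span (kscale \<phi>) Y"
  shows "a * b \<in> module.span (kscale \<phi>) Z"
  using assms(2)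
proof (induction b rule: V.span_induct_alt)
  case base then show ?case by (simp add: V.span_zero)
next
  case (step c x y)
  have "a * (kscale \<phi> c x + y) = kscale \<phi> c (a * x) + a * y"
    by (simp add: kscale_def algebra_simps)
  then show ?case using step assms(1) by (simp add: V.span_add V.span_scale)
qed

lemma span_mult:
  assumes "\<forall>a\<in>X. \<forall>b\<in>Y. a * b \<in> module.span (kscale \<phi>) Z"
    "a \<in> module.span (kscale \<phi>) X" "b \<in> module.span (kscale \<phi>) Y"
  shows "a * b \<in> module.span (kscale \<phi>) Z"
proof -
  have "\<forall>a\<in>X. a * b \<in> module.span (kscale \<phi>) Z"
    using assms(1,3) span_mult_left by blast
  then have "\<forall>a\<in>X. b * a \<in> module.span (kscale \<phi>) Z" by (simp add: mult.commute)
  then have "b * a \<in> module.span (kscale \<phi>) Z" using span_mult_left assms(2) by blast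
  then show ?thesis by (simp add: mult.commute)
qed

lemma span_lin_image:
  assumes "\<forall>a b. g (a + b) = g a + g b" "\<forall>c x. g (\<phi> c * x) = \<phi> c * g x"
    "x \<in> module.span (kscale \<phi>) A"
  shows "g x \<in> module.span (kscale \<phi>) (g ` A)"
  using assms(3)
proof (induction x rule: V.span_induct_alt)
  case base
  have "g 0 = 0" using assms(1) by (metis add_cancel_right_right add_0)
  then show ?case by (simp add: V.span_zero)
next
  case (step c x y)
  have "g (kscale \<phi> c x + y) = kscale \<phi> c (g x) + g y" using assms(1,2) by (simp add: kscale_def)
  then show ?case using step by (simp add: V.span_add V.span_scale V.span_base)
qed

lemma span_kscale_iff: "module.span (kscale \<phi>) A = V.span A" by simp

end

definition mon :: "'a::comm_ring_1 set \<Rightarrow> ('a \<Rightarrow> nat) \<Rightarrow> 'a" where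
  "mon S \<gamma> = (\<Prod>x\<in>S. x ^ \<gamma> x)"

definition Exps :: "'a set \<Rightarrow> nat \<Rightarrow> ('a \<Rightarrow> nat) set" where
  "Exps S D = {\<gamma>. (\<forall>x. x \<notin> S \<longrightarrow> \<gamma> x = 0) \<and> sum \<gamma> S \<le> D}"

lemma mon_add: "mon S (\<gamma> + \<delta>) = mon S \<gamma> * mon S \<delta>"
  unfolding mon_def by (simp add: power_add prod.distrib)

lemma Exps_add: "\<gamma> \<in> Exps S a \<Longrightarrow> \<delta> \<in> Exps S b \<Longrightarrow> \<gamma> + \<delta> \<in> Exps S (a + b)"
  unfolding Exps_def by (auto simp: sum.distrib)

lemma Exps_mono: "a \<le> b \<Longrightarrow> Exps S a \<subseteq> Exps S b"
  unfolding Exps_def by auto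

lemma Exps_0: "(\<lambda>_. 0) \<in> Exps S D" unfolding Exps_def by auto

lemma mon_0: "mon S (\<lambda>_. 0) = 1" unfolding mon_def by simp

lemma Exps_sub_box:
  assumes f: "finite S"
  shows "Exps S D \<subseteq> (\<lambda>f x. if x \<in> S then f x else 0) ` (PiE S (\<lambda>_. {..D}))"
proof
  fix \<gamma> assume g: "\<gamma> \<in> Exps S D"
  show "\<gamma> \<in> (\<lambda>f x. if x \<in> S then f x else 0) ` (PiE S (\<lambda>_. {..D}))"
  proof (rule image_eqI[of _ _ "restrict \<gamma> S"])
    show "\<gamma> = (\<lambda>x. if x \<in> S then restrict \<gamma> S x else 0)" using g by (auto simp: Exps_def)
    show "restrict \<gamma> S \<in> PiE S (\<lambda>_. {..D})"
      using g f by (auto simp: Exps_def intro: order_trans[OF member_le_sum])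
  qed
qed

lemma Exps_finite: "finite S \<Longrightarrow> finite (Exps S D)"
  by (rule finite_subset[OF Exps_sub_box]) (simp_all add: finite_PiE)

lemma Exps_card: "finite S \<Longrightarrow> card (Exps S D) \<le> (D + 1) ^ card S"
proof -
  assume f: "finite S"
  have "card (Exps S D) \<le> card ((\<lambda>f x. if x \<in> S then f x else 0) ` (PiE S (\<lambda>_. {..D})))"
    by (rule card_mono[OF _ Exps_sub_box]) (simp_all add: f finite_PiE)
  also have "\<dots> \<le> card (PiE S (\<lambda>_. {..D}))" by (rule card_image_le) (simp add: f finite_PiE)
  also have "\<dots> = (D + 1) ^ card S" by (simp add: card_PiE f)
  finally show ?thesis .
qed

context fixes \<phi> :: "'k::field \<Rightarrow> 'a::comm_ring_1" assumes h\<phi>: "kalg_hom \<phi>"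
begin

interpretation V: vector_space "kscale \<phi>" by (rule vs_kscale[OF h\<phi>])

lemma M_mult:
  assumes "a \<in> V.span (mon S ` Exps S p)" "b \<in> V.span (mon S ` Exps S q)"
  shows "a * b \<in> V.span (mon S ` Exps S (p + q))"
  by (rule span_mult[OF h\<phi> _ assms]) (auto intro!: V.span_base simp: mon_add[symmetric] Exps_add)

lemma M_mono: "p \<le> q \<Longrightarrow> V.span (mon S ` Exps S p) \<subseteq> V.span (mon S ` Exps S q)"
  by (intro V.span_mono image_mono Exps_mono)

lemma M_one: "1 \<in> V.span (mon S ` Exps S p)"
  using V.span_base[of 1 "mon S ` Exps S p"] Exps_0[of S p] mon_0[of S] by force

lemma M_prod:
  assumes "finite G" "\<And>g. g \<in> G \<Longrightarrow> f g \<in> V.span (mon S ` Exps S p)"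
  shows "prod f G \<in> V.span (mon S ` Exps S (p * card G))"
  using assms
proof (induction G rule: finite_induct)
  case empty then show ?case by (simp add: M_one)
next
  case (insert x F)
  have "f x * prod f F \<in> V.span (mon S ` Exps S (p + p * card F))"
    using insert by (intro M_mult) auto
  then show ?case using insert by simp
qed

end

lemma rel_exists:
  fixes \<phi> :: "'k::field \<Rightarrow> 'f::field"
  assumes h\<phi>: "kalg_hom \<phi>" and ind: "alg_indep \<phi> S"
    and mx: "\<forall>y. y \<notin> S \<longrightarrow> \<not> alg_indep \<phi> (insert y S)"
  shows "\<exists>e A P. 1 \<le> e \<and> (\<forall>j\<le>e. P j \<in> module.span (kscale \<phi>) (mon S ` Exps S A)) \<and> P e \<noteq> 0
      \<and> (\<Sum>j\<le>e. P j * g ^ j) = 0"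
proof -
  interpret V: vector_space "kscale \<phi>" by (rule vs_kscale[OF h\<phi>])
  have fS: "finite S" using ind by (simp add: alg_indep_def)
  show ?thesis
  proof (cases "g \<in> S")
    case True
    define \<delta> where "\<delta> = (\<lambda>x. if x = g then 1 else 0::nat)"
    have d1: "\<delta> \<in> Exps S 1" using True fS by (simp add: Exps_def \<delta>_def)
    have "mon S \<delta> = (\<Prod>x\<in>S. if x = g then x else 1)"
      unfolding mon_def \<delta>_def by (rule prod.cong) auto
    also have "\<dots> = g" using True fS by (simp add: prod.delta)
    finally have md: "mon S \<delta> = g" .
    have "g \<in> V.span (mon S ` Exps S 1)" using md d1 by (metis V.span_base image_eqI)
    then have ng: "- g \<in> V.span (mon S ` Exps S 1)" by (rule V.span_neg)
    show ?thesis
      apply (rule exI[of _ 1], rule exI[of _ 1], rule exI[of _ "\<lambda>j. if j = 0 then - g else 1"])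
      using ng M_one[OF h\<phi>] by (auto simp: le_Suc_eq)
  next
    case False
    have "\<not> alg_indep \<phi> (insert g S)" using mx False by auto
    then obtain E c where fE: "finite E" and supp: "\<forall>e\<in>E. \<forall>x. x \<notin> insert g S \<longrightarrow> e x = 0"
      and s0: "(\<Sum>e\<in>E. \<phi> (c e) * (\<Prod>x\<in>insert g S. x ^ e x)) = 0" and ex: "\<exists>e\<in>E. c e \<noteq> 0"
      using fS unfolding alg_indep_def by auto
    obtain e0 where e0: "e0 \<in> E" "c e0 \<noteq> 0" using ex by auto
    define r where "r e = (\<lambda>x. if x \<in> S then e x else 0)" for e :: "'f \<Rightarrow> nat"
    have mr: "mon S (r e) = (\<Prod>x\<in>S. x ^ e x)" for e
      unfolding mon_def r_def by (rule prod.cong) auto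
    have ps: "(\<Prod>x\<in>insert g S. x ^ e x) = g ^ e g * mon S (r e)" for e
      using False fS by (simp add: mr)
    define A0 where "A0 = (\<Sum>e\<in>E. sum e S)"
    have rex: "r e \<in> Exps S A0" if "e \<in> E" for e
    proof -
      have "sum (r e) S = sum e S" unfolding r_def by (rule sum.cong) auto
      also have "\<dots> \<le> A0" unfolding A0_def using fE that by (intro member_le_sum) auto
      finally show ?thesis by (simp add: Exps_def r_def)
    qed
    define Mx where "Mx = Max ((\<lambda>e. e g) ` E)"
    have leMx: "e g \<le> Mx" if "e \<in> E" for e unfolding Mx_def using fE that by auto
    define P0 where "P0 j = (\<Sum>e\<in>{e\<in>E. e g = j}. \<phi> (c e) * mon S (r e))" for j
    have P0in: "P0 j \<in> V.span (mon S ` Exps S A0)" for j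
      unfolding P0_def
    proof (rule V.span_sum)
      fix e assume "e \<in> {e\<in>E. e g = j}"
      then have "mon S (r e) \<in> V.span (mon S ` Exps S A0)" using rex by (auto intro: V.span_base)
      from V.span_scale[OF this, of "c e"] show "\<phi> (c e) * mon S (r e) \<in> V.span (mon S ` Exps S A0)"
        by (simp add: kscale_def)
    qed
    have sumMx: "(\<Sum>j\<le>Mx. P0 j * g ^ j) = 0"
    proof -
      have "(\<Sum>j\<le>Mx. P0 j * g ^ j) = (\<Sum>j\<le>Mx. \<Sum>e\<in>{e\<in>E. e g = j}. \<phi> (c e) * (g ^ e g * mon S (r e)))"
        unfolding P0_def sum_distrib_right by (intro sum.cong refl) (auto simp: algebra_simps)
      also have "\<dots> = (\<Sum>e\<in>E. \<phi> (c e) * (g ^ e g * mon S (r e)))"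
        by (rule sum.group) (use fE leMx in auto)
      also have "\<dots> = 0" using s0 by (simp add: ps)
      finally show ?thesis .
    qed
    have P0ne: "P0 (e0 g) \<noteq> 0"
    proof
      assume z: "P0 (e0 g) = 0"
      define F0 where "F0 = {e\<in>E. e g = e0 g}"
      have inj: "inj_on r F0"
      proof (rule inj_onI)
        fix e e' assume a: "e \<in> F0" "e' \<in> F0" "r e = r e'"
        show "e = e'"
        proof
          fix x show "e x = e' x"
          proof (cases "x \<in> S")
            case True then show ?thesis using fun_cong[OF a(3), of x] by (simp add: r_def)
          next
            case xn: False
            show ?thesis
            proof (cases "x = g")
              case True then show ?thesis using a by (simp add: F0_def)
            next
              case False
              have "e \<in> E" "e' \<in> E" using a by (auto simp: F0_def)
              then show ?thesis using False xn supp by (metis insertE)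
            qed
          qed
        qed
      qed
      define c' where "c' \<gamma> = c (the_inv_into F0 r \<gamma>)" for \<gamma>
      have fF0: "finite F0" using fE by (simp add: F0_def)
      have "(\<Sum>\<gamma>\<in>r ` F0. \<phi> (c' \<gamma>) * (\<Prod>x\<in>S. x ^ \<gamma> x)) = (\<Sum>e\<in>F0. \<phi> (c' (r e)) * mon S (r e))"
        by (subst sum.reindex[OF inj]) (simp add: mon_def)
      also have "\<dots> = P0 (e0 g)" unfolding P0_def F0_def[symmetric] c'_def
        by (rule sum.cong) (auto simp: the_inv_into_f_f[OF inj])
      finally have "(\<Sum>\<gamma>\<in>r ` F0. \<phi> (c' \<gamma>) * (\<Prod>x\<in>S. x ^ \<gamma> x)) = 0" using z by simp
      moreover have "\<forall>\<gamma>\<in>r ` F0. \<forall>x. x \<notin> S \<longrightarrow> \<gamma> x = 0" by (auto simp: r_def)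
      ultimately have "\<forall>\<gamma>\<in>r ` F0. c' \<gamma> = 0" using ind fF0 unfolding alg_indep_def by blast
      moreover have "e0 \<in> F0" using e0 by (simp add: F0_def)
      ultimately have "c' (r e0) = 0" by blast
      then have "c e0 = 0" unfolding c'_def using the_inv_into_f_f[OF inj \<open>e0 \<in> F0\<close>] by simp
      then show False using e0 by simp
    qed
    define NZ where "NZ = {j \<in> {..Mx}. P0 j \<noteq> 0}"
    have fNZ: "finite NZ" "NZ \<noteq> {}" using P0ne leMx[OF e0(1)] by (auto simp: NZ_def)
    define e where "e = Max NZ"
    have eNZ: "e \<in> NZ" using fNZ by (simp add: e_def)
    have eMx: "e \<le> Mx" and Pe: "P0 e \<noteq> 0" using eNZ by (auto simp: NZ_def)
    have big0: "P0 j = 0" if "j \<le> Mx" "e < j" for j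
    proof (rule ccontr)
      assume "P0 j \<noteq> 0" then have "j \<in> NZ" using that by (simp add: NZ_def)
      then have "j \<le> e" using fNZ by (simp add: e_def)
      then show False using that by simp
    qed
    have se: "(\<Sum>j\<le>e. P0 j * g ^ j) = 0"
    proof -
      have "(\<Sum>j\<le>e. P0 j * g ^ j) = (\<Sum>j\<le>Mx. P0 j * g ^ j)"
        by (rule sum.mono_neutral_left) (use eMx big0 in auto)
      then show ?thesis using sumMx by simp
    qed
    have e1: "1 \<le> e"
    proof (rule ccontr)
      assume "\<not> 1 \<le> e" then have "e = 0" by simp
      then show False using se Pe by simp
    qed
    show ?thesis using e1 P0in Pe se by blast
  qed
qed

lemma core_bound:
  fixes \<phi> :: "'k::field \<Rightarrow> 'f::field"
  assumes h\<phi>: "kalg_hom \<phi>" and ind: "alg_indep \<phi> S"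
    and mx: "\<forall>y. y \<notin> S \<longrightarrow> \<not> alg_indep \<phi> (insert y S)" and fG: "finite Gs"
  shows "\<exists>C Ab Zc Tf. C \<noteq> 0 \<and> (\<forall>m. finite (Tf m) \<and> card (Tf m) \<le> Zc * (Ab * m + 1) ^ card S)
     \<and> (\<forall>xs. set xs \<subseteq> Gs \<longrightarrow> C ^ length xs * prod_list xs \<in> module.span (kscale \<phi>) (Tf (length xs)))"
proof -
  interpret V: vector_space "kscale \<phi>" by (rule vs_kscale[OF h\<phi>])
  have fS: "finite S" using ind by (simp add: alg_indep_def)
  define R where "R g t \<longleftrightarrow> 1 \<le> fst t \<and> (\<forall>j\<le>fst t. snd (snd t) j \<in> V.span (mon S ` Exps S (fst (snd t))))
      \<and> snd (snd t) (fst t) \<noteq> 0 \<and> (\<Sum>j\<le>fst t. snd (snd t) j * g ^ j) = 0" for g and t :: "nat \<times> nat \<times> (nat \<Rightarrow> 'f)"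
  have "\<forall>g. \<exists>t. R g t"
  proof
    fix g
    obtain e A P where "1 \<le> e \<and> (\<forall>j\<le>e. P j \<in> V.span (mon S ` Exps S A)) \<and> P e \<noteq> 0
      \<and> (\<Sum>j\<le>e. P j * g ^ j) = 0" using rel_exists[OF h\<phi> ind mx] by blast
    then have "R g (e, A, P)" by (simp add: R_def)
    then show "\<exists>t. R g t" ..
  qed
  then obtain F where F: "\<And>g. R g (F g)" by metis
  define e where "e g = fst (F g)" for g
  define A where "A g = fst (snd (F g))" for g
  define P where "P g = snd (snd (F g))" for g
  have eAP: "\<And>g. 1 \<le> e g" "\<And>g j. j \<le> e g \<Longrightarrow> P g j \<in> V.span (mon S ` Exps S (A g))"
    "\<And>g. P g (e g) \<noteq> 0" "\<And>g. (\<Sum>j\<le>e g. P g j * g ^ j) = 0"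
    using F unfolding R_def e_def A_def P_def by auto
  define Aa where "Aa = (\<Sum>g\<in>Gs. A g)"
  have PM: "P g j \<in> V.span (mon S ` Exps S Aa)" if "g \<in> Gs" "j \<le> e g" for g j
  proof -
    have "A g \<le> Aa" unfolding Aa_def using fG that by (intro member_le_sum) auto
    then show ?thesis using M_mono[OF h\<phi>] eAP(2)[OF that(2)] by blast
  qed
  define lc where "lc g = P g (e g)" for g
  define C where "C = (\<Prod>g\<in>Gs. lc g)"
  have C0: "C \<noteq> 0" unfolding C_def lc_def using eAP(3) fG by simp
  define Ab where "Ab = Aa * card Gs"
  have CM: "C \<in> V.span (mon S ` Exps S Ab)" unfolding C_def Ab_def lc_def
    by (rule M_prod[OF h\<phi> fG]) (simp add: PM)
  define zf where "zf \<beta> = (\<Prod>g\<in>Gs. g ^ \<beta> g)" for \<beta> :: "'f \<Rightarrow> nat"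
  define Bs where "Bs = PiE Gs (\<lambda>g. {..<e g})"
  define Z where "Z = zf ` Bs"
  have fZ: "finite Z" unfolding Z_def Bs_def using fG by (simp add: finite_PiE)
  define Tf where "Tf m = (\<lambda>(\<gamma>, z). mon S \<gamma> * z) ` (Exps S (Ab * m) \<times> Z)" for m
  have fT: "finite (Tf m)" for m unfolding Tf_def using fZ Exps_finite[OF fS] by simp
  have cT: "card (Tf m) \<le> card Z * (Ab * m + 1) ^ card S" for m
  proof -
    have "card (Tf m) \<le> card (Exps S (Ab * m) \<times> Z)" unfolding Tf_def
      by (rule card_image_le) (simp add: fZ Exps_finite[OF fS])
    also have "\<dots> = card (Exps S (Ab * m)) * card Z" by (simp add: card_cartesian_product)
    also have "\<dots> \<le> (Ab * m + 1) ^ card S * card Z" using Exps_card[OF fS] by (intro mult_right_mono) auto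
    finally show ?thesis by (simp add: mult.commute)
  qed
  have MZ: "a * z \<in> V.span (Tf 1)" if "a \<in> V.span (mon S ` Exps S Ab)" "z \<in> Z" for a z
  proof -
    have "\<forall>x\<in>mon S ` Exps S Ab. \<forall>y\<in>{z}. x * y \<in> V.span (Tf 1)"
      using that(2) by (auto simp: Tf_def intro!: V.span_base)
    then show ?thesis using span_mult[OF h\<phi> _ that(1), of "{z}"] by (simp add: V.span_base)
  qed
  have zf_split: "zf \<beta> = g ^ \<beta> g * (\<Prod>h\<in>Gs - {g}. h ^ \<beta> h)" if "g \<in> Gs" for \<beta> g
    unfolding zf_def using fG that by (simp add: prod.remove)
  have key1: "C * g * z \<in> V.span (Tf 1)" if g: "g \<in> Gs" and z: "z \<in> Z" for g z
  proof -
    obtain \<beta> where b: "\<beta> \<in> Bs" and zb: "z = zf \<beta>" using z by (auto simp: Z_def)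
    have bg: "\<beta> g < e g" using b g by (auto simp: Bs_def)
    have rest: "(\<Prod>h\<in>Gs - {g}. h ^ (\<beta>(g := j)) h) = (\<Prod>h\<in>Gs - {g}. h ^ \<beta> h)" for j
      by (rule prod.cong) auto
    have zupd: "zf (\<beta>(g := j)) = g ^ j * (\<Prod>h\<in>Gs - {g}. h ^ \<beta> h)" for j
      using zf_split[OF g, of "\<beta>(g := j)"] rest by simp
    have bupd: "\<beta>(g := j) \<in> Bs" if "j < e g" for j using b that g by (auto simp: Bs_def PiE_def Pi_def extensional_def)
    show ?thesis
    proof (cases "Suc (\<beta> g) < e g")
      case True
      have "g * z = zf (\<beta>(g := Suc (\<beta> g)))" using zb zf_split[OF g, of \<beta>] zupd by simp
      moreover have "zf (\<beta>(g := Suc (\<beta> g))) \<in> Z" using bupd[OF True] by (simp add: Z_def)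
      ultimately show ?thesis using MZ[OF CM] by (simp add: mult.assoc)
    next
      case False
      then have eg: "e g = Suc (\<beta> g)" using bg by simp
      have gz: "g * z = g ^ e g * zf (\<beta>(g := 0))" using zb zf_split[OF g, of \<beta>] zupd eg by simp
      define C' where "C' = (\<Prod>h\<in>Gs - {g}. lc h)"
      have CC: "C = lc g * C'" unfolding C_def C'_def using fG g by (simp add: prod.remove)
      have "{..e g} = insert (e g) {..<e g}" by auto
      then have "lc g * g ^ e g = - (\<Sum>j<e g. P g j * g ^ j)"
        using eAP(4)[of g] unfolding lc_def by (simp add: eq_neg_iff_add_eq_0 add.commute)
      then have lceq: "lc g * g ^ e g = - (\<Sum>j<e g. P g j * g ^ j)" .
      define rest where "rest = (\<Prod>h\<in>Gs - {g}. h ^ \<beta> h)"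
      have "C * g * z = C' * (lc g * g ^ e g) * rest" using CC gz zupd[of 0] by (simp add: rest_def ac_simps)
      also have "\<dots> = C' * (- (\<Sum>j<e g. P g j * g ^ j)) * rest" by (simp only: lceq)
      also have "\<dots> = - (\<Sum>j<e g. (C' * P g j) * zf (\<beta>(g := j)))"
        by (simp add: zupd rest_def sum_distrib_left sum_distrib_right sum_negf ac_simps)
      finally have "C * g * z = - (\<Sum>j<e g. (C' * P g j) * zf (\<beta>(g := j)))" .
      also have "\<dots> \<in> V.span (Tf 1)"
      proof (intro V.span_neg V.span_sum MZ)
        fix j assume j: "j \<in> {..<e g}"
        have C'M: "C' \<in> V.span (mon S ` Exps S (Aa * card (Gs - {g})))" unfolding C'_def lc_def
          by (rule M_prod) (use h\<phi> fG PM in auto)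
        have "card (Gs - {g}) + 1 = card Gs" using fG g
          by (metis Suc_eq_plus1 card_Suc_Diff1)
        then have "Aa * card (Gs - {g}) + Aa = Ab" unfolding Ab_def by (metis add_mult_distrib2 mult.right_neutral)
        then show "C' * P g j \<in> V.span (mon S ` Exps S Ab)"
          using M_mult[OF h\<phi> C'M PM[OF g, of j]] j by simp
        show "zf (\<beta>(g := j)) \<in> Z" using bupd j by (simp add: Z_def)
      qed
      finally show ?thesis .
    qed
  qed
  have key2: "(C * g) * y \<in> V.span (Tf (Suc m))" if g: "g \<in> Gs" and y: "y \<in> V.span (Tf m)" for g y m
  proof (rule span_mult_left[OF h\<phi> _ y], intro ballI)
    fix b assume "b \<in> Tf m"
    then obtain \<gamma> z where gz: "\<gamma> \<in> Exps S (Ab * m)" "z \<in> Z" and bb: "b = mon S \<gamma> * z"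
      by (auto simp: Tf_def)
    have "mon S \<gamma> * (C * g * z) \<in> V.span (Tf (Suc m))"
    proof (rule span_mult_left[OF h\<phi> _ key1[OF g gz(2)]], intro ballI)
      fix b' assume "b' \<in> Tf 1"
      then obtain \<delta> z' where dz: "\<delta> \<in> Exps S (Ab * 1)" "z' \<in> Z" and bb': "b' = mon S \<delta> * z'"
        by (auto simp: Tf_def)
      have "\<gamma> + \<delta> \<in> Exps S (Ab * Suc m)" using Exps_add[OF gz(1) dz(1)] by (simp add: algebra_simps)
      then have "mon S (\<gamma> + \<delta>) * z' \<in> Tf (Suc m)" using dz(2) by (auto simp: Tf_def)
      then show "mon S \<gamma> * b' \<in> V.span (Tf (Suc m))" by (simp add: bb' mon_add mult.assoc V.span_base)
    qed
    then show "C * g * b \<in> V.span (Tf (Suc m))" by (simp add: bb algebra_simps)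
  qed
  have main: "C ^ length xs * prod_list xs \<in> V.span (Tf (length xs))" if "set xs \<subseteq> Gs" for xs
    using that
  proof (induction xs)
    case Nil
    define \<beta>0 :: "'f \<Rightarrow> nat" where "\<beta>0 = (\<lambda>g. if g \<in> Gs then 0 else undefined)"
    have "\<beta>0 \<in> Bs" unfolding Bs_def \<beta>0_def using eAP(1) by (auto simp: PiE_def Pi_def extensional_def Suc_le_eq)
    moreover have "zf \<beta>0 = 1" unfolding zf_def \<beta>0_def by simp
    ultimately have "1 \<in> Z" by (metis Z_def image_eqI)
    then have "mon S (\<lambda>_. 0) * 1 \<in> Tf 0" unfolding Tf_def using Exps_0 by force
    then show ?case by (simp add: mon_0 V.span_base)
  next
    case (Cons g xs)
    then have "(C * g) * (C ^ length xs * prod_list xs) \<in> V.span (Tf (Suc (length xs)))"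
      by (intro key2) auto
    then show ?case by (simp add: algebra_simps)
  qed
  show ?thesis
    apply (rule exI[of _ C], rule exI[of _ Ab], rule exI[of _ "card Z"], rule exI[of _ Tf])
    using C0 fT cT main by auto
qed

definition emb :: "'r::idom \<Rightarrow> 'r fract" where "emb r = Fract r 1"

lemma emb_add: "emb (a + b) = emb a + emb b" by (simp add: emb_def)
lemma emb_mult: "emb (a * b) = emb a * emb b" by (simp add: emb_def)
lemma emb_one: "emb 1 = 1" by (simp add: emb_def One_fract_def)
lemma emb_zero: "emb 0 = 0" by (simp add: emb_def Zero_fract_def)
lemma emb_inj: "emb a = emb b \<longleftrightarrow> a = b" by (simp add: emb_def eq_fract)
lemma emb_eq0: "emb a = 0 \<longleftrightarrow> a = 0" using emb_inj[of a 0] by (simp add: emb_zero)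
lemma emb_prod_list: "emb (prod_list xs) = prod_list (map emb xs)"
  by (induction xs) (simp_all add: emb_one emb_mult)
lemma emb_sum: "emb (sum f A) = (\<Sum>x\<in>A. emb (f x))"
  by (induction A rule: infinite_finite_induct) (simp_all add: emb_zero emb_add)
lemma emb_prod: "emb (prod f A) = (\<Prod>x\<in>A. emb (f x))"
  by (induction A rule: infinite_finite_induct) (simp_all add: emb_one emb_mult)
lemma emb_power: "emb (a ^ n) = emb a ^ n"
  by (induction n) (simp_all add: emb_one emb_mult)
lemma frac_emb_emb: "frac_emb \<iota> c = emb (\<iota> c)" by (simp add: frac_emb_def emb_def)

lemma kalg_frac: "kalg_hom \<iota> \<Longrightarrow> kalg_hom (frac_emb \<iota>)"
  unfolding kalg_hom_def frac_emb_emb by (simp add: emb_one emb_add emb_mult)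

lemma fun_sum_apply: "(\<Sum>x\<in>A. f x) n = (\<Sum>x\<in>A. f x n)"
  by (induction A rule: infinite_finite_induct) (simp_all add: plus_fun_def zero_fun_def)

lemma smono_add: "smono (a + b::'a::comm_monoid_add) n = smono a n + smono b n"
  by (auto simp add: smono_def fun_eq_iff plus_fun_def)

lemma smono_zero: "smono (0::'a::zero) n = 0" by (simp add: smono_def fun_eq_iff zero_fun_def)

context fixes \<phi> :: "'k::field \<Rightarrow> 'a::comm_ring_1" assumes h\<phi>: "kalg_hom \<phi>"
begin

interpretation V: vector_space "kscale \<phi>" by (rule vs_kscale[OF h\<phi>])
interpretation VF: vector_space "sl_scale \<phi>" by (rule vs_sl[OF h\<phi>])

lemma smono_in_span:
  assumes "x \<in> V.span T" and that: "n \<in> I"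
  shows "smono x n \<in> VF.span {smono t i | t i. t \<in> T \<and> i \<in> I}"
  using assms(1)
proof (induction x rule: V.span_induct_alt)
  case base
  have z: "smono (0::'a) n = 0" by (simp add: smono_def fun_eq_iff)
  show ?case unfolding z by (rule VF.span_zero)
next
  case (step c x y)
  have eq: "smono (kscale \<phi> c x + y) n = sl_scale \<phi> c (smono x n) + smono y n"
    by (simp add: smono_def fun_eq_iff plus_fun_def kscale_def sl_scale_def)
  have mem: "smono x n \<in> {smono t i | t i. t \<in> T \<and> i \<in> I}" using step that by auto
  have "sl_scale \<phi> c (smono x n) \<in> VF.span {smono t i | t i. t \<in> T \<and> i \<in> I}"
    by (rule VF.span_scale[OF VF.span_base[OF mem]])
  from VF.span_add[OF this step.IH] show ?case by (simp only: eq)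
qed

lemma fun_span:
  assumes "finite I" "\<forall>n. n \<notin> I \<longrightarrow> f n = 0" "\<forall>n\<in>I. f n \<in> V.span T"
  shows "f \<in> VF.span {smono t i | t i. t \<in> T \<and> i \<in> I}"
proof -
  have "f = (\<Sum>n\<in>I. smono (f n) n)"
  proof
    fix x
    show "f x = (\<Sum>n\<in>I. smono (f n) n) x"
      unfolding fun_sum_apply using assms(1,2) by (cases "x \<in> I") (simp_all add: smono_def)
  qed
  also have "\<dots> \<in> VF.span {smono t i | t i. t \<in> T \<and> i \<in> I}"
  proof (rule VF.span_sum)
    fix n assume n: "n \<in> I"
    show "smono (f n) n \<in> VF.span {smono t i | t i. t \<in> T \<and> i \<in> I}"
      by (rule smono_in_span[OF bspec[OF assms(3) n] n])
  qed
  finally show ?thesis .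
qed

lemma card_monos:
  assumes "finite I" "finite T"
  shows "finite {smono t i | t i. t \<in> T \<and> i \<in> I} \<and> card {smono t i | t i. t \<in> T \<and> i \<in> I} \<le> card T * card I"
proof -
  have e: "{smono t i | t i. t \<in> T \<and> i \<in> I} = (\<lambda>(t, i). smono t i) ` (T \<times> I)" by auto
  have "card ((\<lambda>(t, i). smono t i) ` (T \<times> I)) \<le> card (T \<times> I)"
    by (rule card_image_le) (simp add: assms)
  then show ?thesis unfolding e using assms by (simp add: card_cartesian_product)
qed

end

lemma span_prod_lists:
  fixes \<phi> :: "'k::field \<Rightarrow> 'a::comm_ring_1"
  assumes h\<phi>: "kalg_hom \<phi>" and "set xs \<subseteq> module.span (kscale \<phi>) G"
  shows "prod_list xs \<in> module.span (kscale \<phi>) {prod_list ys | ys. length ys = length xs \<and> set ys \<subseteq> G}"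
proof -
  interpret V: vector_space "kscale \<phi>" by (rule vs_kscale[OF h\<phi>])
  show ?thesis
  using assms(2)
  proof (induction xs)
  case Nil
  show ?case by (rule V.span_base) auto
next
  case (Cons a xs)
  have IH: "prod_list xs \<in> V.span {prod_list ys | ys. length ys = length xs \<and> set ys \<subseteq> G}"
    using Cons by simp
  have a: "a \<in> V.span G" using Cons.prems by simp
  have "a * prod_list xs \<in> V.span {prod_list ys | ys. length ys = length (a # xs) \<and> set ys \<subseteq> G}"
  proof (rule span_mult[OF h\<phi> _ a IH], intro ballI)
      fix g b assume g: "g \<in> G" and "b \<in> {prod_list ys |ys. length ys = length xs \<and> set ys \<subseteq> G}"
      then obtain ys where "b = prod_list ys" "length ys = length xs" "set ys \<subseteq> G" by auto
      then have "g * b \<in> {prod_list ys |ys. length ys = length (a # xs) \<and> set ys \<subseteq> G}"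
        using g by (auto intro!: exI[of _ "g # ys"])
      then show "g * b \<in> V.span {prod_list ys |ys. length ys = length (a # xs) \<and> set ys \<subseteq> G}"
        by (rule V.span_base)
  qed
  then show ?case by simp
qed
qed

lemma hm_prod_list:
  assumes "hm \<iota> f" shows "f (prod_list xs) = prod_list (map f xs)"
proof -
  have m: "\<And>a b. f (a * b) = f a * f b" and o: "f 1 = 1" using assms by (auto simp: hm_def)
  show ?thesis by (induction xs) (simp_all add: m o)
qed

lemma upper_main:
  fixes \<iota> :: "'k::field \<Rightarrow> 'r::idom" and \<sigma> :: "'r \<Rightarrow> 'r"
  assumes h\<iota>: "kalg_hom \<iota>" and aut: "k_aut \<iota> \<sigma>" and la: "locally_algebraic \<iota> \<sigma>"
    and tr: "trdeg_eq (frac_emb \<iota>) d" and fF: "finite F" and Fsl: "F \<subseteq> skew_laurent"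
  shows "\<exists>c::nat. \<forall>m. \<exists>B. finite B \<and> module.independent (sl_scale \<iota>) B
     \<and> pow_space (sl_scale \<iota>) (sl_mult \<sigma>) sl_one (module.span (sl_scale \<iota>) (insert sl_one F)) m
          \<subseteq> module.span (sl_scale \<iota>) B
     \<and> card B = vector_space.dim (sl_scale \<iota>) (pow_space (sl_scale \<iota>) (sl_mult \<sigma>) sl_one (module.span (sl_scale \<iota>) (insert sl_one F)) m)
     \<and> card B \<le> c * (m + 1) ^ (d + 1)"
proof -
  interpret VR: vector_space "kscale \<iota>" by (rule vs_kscale[OF h\<iota>])
  interpret VF: vector_space "sl_scale \<iota>" by (rule vs_sl[OF h\<iota>])
  have hK: "kalg_hom (frac_emb \<iota>)" by (rule kalg_frac[OF h\<iota>])
  interpret VK: vector_space "kscale (frac_emb \<iota>)" by (rule vs_kscale[OF hK])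
  interpret VKF: vector_space "sl_scale (frac_emb \<iota>)" by (rule vs_sl[OF hK])
  have hmz: "\<And>i. hm \<iota> (zpow \<sigma> i)" by (rule zpow_hm[OF aut])
  have z0: "\<And>i. zpow \<sigma> i 0 = 0" using hm_0[OF hmz] .
  define Vsp where "Vsp = VF.span (insert sl_one F)"
  define Coef where "Coef = insert 1 (\<Union>f\<in>F. f ` {n. f n \<noteq> 0})"
  have fCoef: "finite Coef" unfolding Coef_def using fF Fsl by (auto simp: skew_laurent_def)
  have "\<forall>r. \<exists>Fx. finite Fx \<and> (\<forall>n. zpow \<sigma> n r \<in> VR.span Fx)"
    using la by (simp add: locally_algebraic_def)
  from choice[OF this] obtain Fr where Fr: "\<And>r. finite (Fr r)" "\<And>r n. zpow \<sigma> n r \<in> VR.span (Fr r)"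
    by blast
  define G where "G = (\<Union>r\<in>Coef. Fr r)"
  have fG: "finite G" unfolding G_def using fCoef Fr(1) by simp
  define gens where "gens = {zpow \<sigma> n r | n r. r \<in> Coef}"
  define W0 where "W0 = VR.span gens"
  have W0G: "W0 \<subseteq> VR.span G"
    unfolding W0_def
  proof (rule VR.span_minimal[OF _ VR.subspace_span], rule subsetI)
    fix x assume "x \<in> gens"
    then obtain n r where x: "x = zpow \<sigma> n r" "r \<in> Coef" by (auto simp: gens_def)
    have "Fr r \<subseteq> G" using x(2) by (auto simp: G_def)
    then show "x \<in> VR.span G" using Fr(2)[of n r] VR.span_mono x(1) by blast
  qed
  have W0stab: "zpow \<sigma> i x \<in> W0" if "x \<in> W0" for i x
  proof -
    have "zpow \<sigma> i x \<in> VR.span (zpow \<sigma> i ` gens)"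
      by (rule span_lin_image[OF h\<iota>]) (use hmz[of i] that in \<open>auto simp: hm_def W0_def\<close>)
    moreover have "zpow \<sigma> i ` gens \<subseteq> gens"
    proof
      fix y assume "y \<in> zpow \<sigma> i ` gens"
      then obtain n r where "y = zpow \<sigma> i (zpow \<sigma> n r)" "r \<in> Coef" by (auto simp: gens_def)
      then have "y = zpow \<sigma> (i + n) r" "r \<in> Coef" by (auto simp: zpow_add[OF aut])
      then show "y \<in> gens" unfolding gens_def by blast
    qed
    ultimately show ?thesis unfolding W0_def using VR.span_mono by blast
  qed
  have CoefW0: "Coef \<subseteq> W0"
  proof
    fix r assume "r \<in> Coef"
    then have "zpow \<sigma> 0 r \<in> gens" unfolding gens_def by blast
    then show "r \<in> W0" unfolding W0_def by (simp add: VR.span_base)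
  qed
  define N :: nat where "N = Max (insert 0 (\<Union>f\<in>F. (\<lambda>n. nat \<bar>n\<bar>) ` {n. f n \<noteq> 0}))"
  have Nb: "\<bar>n\<bar> \<le> int N" if "f \<in> F" "f n \<noteq> 0" for f n
  proof -
    have fin: "finite (insert 0 (\<Union>f\<in>F. (\<lambda>n. nat \<bar>n\<bar>) ` {n. f n \<noteq> 0}))"
      using fF Fsl by (auto simp: skew_laurent_def)
    have "nat \<bar>n\<bar> \<le> N" unfolding N_def using that by (intro Max_ge[OF fin]) auto
    then show ?thesis by simp
  qed
  define Pk where "Pk k = VR.span {prod_list xs | xs. length xs = k \<and> set xs \<subseteq> W0}" for k
  define Qk where "Qk k = {f. (\<forall>n. f n \<noteq> 0 \<longrightarrow> \<bar>n\<bar> \<le> int (N * k)) \<and> (\<forall>n. f n \<in> Pk k)}" for k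
  define X where "X = {x. (\<forall>n. x n \<noteq> 0 \<longrightarrow> \<bar>n\<bar> \<le> int N) \<and> (\<forall>n. x n \<in> W0)}"
  have subQ: "VF.subspace (Qk k)" for k
    unfolding VF.subspace_def
  proof (intro conjI ballI allI)
    show "0 \<in> Qk k" by (simp add: Qk_def Pk_def VR.span_zero)
  next
    fix x y assume x: "x \<in> Qk k" and y: "y \<in> Qk k"
    have "(x + y) n \<noteq> 0 \<longrightarrow> \<bar>n\<bar> \<le> int (N * k)" for n
    proof
      assume "(x + y) n \<noteq> 0"
      then have "x n \<noteq> 0 \<or> y n \<noteq> 0" by auto
      then show "\<bar>n\<bar> \<le> int (N * k)" using x y by (auto simp: Qk_def)
    qed
    moreover have "(x + y) n \<in> Pk k" for n
      using x y by (simp add: Qk_def Pk_def VR.span_add)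
    ultimately show "x + y \<in> Qk k" by (simp add: Qk_def)
  next
    fix c x assume x: "x \<in> Qk k"
    have "sl_scale \<iota> c x n = kscale \<iota> c (x n)" for n by (simp add: sl_scale_def kscale_def)
    then show "sl_scale \<iota> c x \<in> Qk k" using x
      by (auto simp: Qk_def Pk_def VR.span_scale)
  qed
  have subX: "VF.subspace X"
    unfolding VF.subspace_def
  proof (intro conjI ballI allI)
    show "0 \<in> X" by (simp add: X_def W0_def VR.span_zero)
  next
    fix x y assume x: "x \<in> X" and y: "y \<in> X"
    have "(x + y) n \<noteq> 0 \<longrightarrow> \<bar>n\<bar> \<le> int N" for n
    proof
      assume "(x + y) n \<noteq> 0"
      then have "x n \<noteq> 0 \<or> y n \<noteq> 0" by auto
      then show "\<bar>n\<bar> \<le> int N" using x y by (auto simp: X_def)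
    qed
    moreover have "(x + y) n \<in> W0" for n
      using x y by (simp add: X_def W0_def VR.span_add)
    ultimately show "x + y \<in> X" by (simp add: X_def)
  next
    fix c x assume x: "x \<in> X"
    have "sl_scale \<iota> c x n = kscale \<iota> c (x n)" for n by (simp add: sl_scale_def kscale_def)
    then show "sl_scale \<iota> c x \<in> X" using x
      by (auto simp: X_def W0_def VR.span_scale)
  qed
  have Pstab: "zpow \<sigma> i p \<in> Pk k" if "p \<in> Pk k" for i p k
  proof -
    have "zpow \<sigma> i p \<in> VR.span (zpow \<sigma> i ` {prod_list xs | xs. length xs = k \<and> set xs \<subseteq> W0})"
      by (rule span_lin_image[OF h\<iota>]) (use hmz[of i] that in \<open>auto simp: hm_def Pk_def\<close>)
    moreover have "zpow \<sigma> i ` {prod_list xs | xs. length xs = k \<and> set xs \<subseteq> W0}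
        \<subseteq> {prod_list xs | xs. length xs = k \<and> set xs \<subseteq> W0}"
    proof
      fix y assume "y \<in> zpow \<sigma> i ` {prod_list xs | xs. length xs = k \<and> set xs \<subseteq> W0}"
      then obtain xs where y: "y = zpow \<sigma> i (prod_list xs)" "length xs = k" "set xs \<subseteq> W0" by auto
      have "zpow \<sigma> i (prod_list xs) = prod_list (map (zpow \<sigma> i) xs)"
        by (rule hm_prod_list[OF hmz])
      moreover have "set (map (zpow \<sigma> i) xs) \<subseteq> W0" using y W0stab by auto
      ultimately show "y \<in> {prod_list xs | xs. length xs = k \<and> set xs \<subseteq> W0}"
        using y by (intro CollectI exI[of _ "map (zpow \<sigma> i) xs"]) simp
    qed
    ultimately show ?thesis unfolding Pk_def using VR.span_mono by blast
  qed
  have Pmult: "a * p \<in> Pk (Suc k)" if a: "a \<in> W0" and p: "p \<in> Pk k" for a p k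
    unfolding Pk_def
  proof (rule span_mult_left[OF h\<iota> _ p[unfolded Pk_def]], intro ballI)
    fix b assume "b \<in> {prod_list xs | xs. length xs = k \<and> set xs \<subseteq> W0}"
    then obtain xs where b: "b = prod_list xs" "length xs = k" "set xs \<subseteq> W0" by auto
    then have "a * b \<in> {prod_list xs | xs. length xs = Suc k \<and> set xs \<subseteq> W0}"
      using a by (intro CollectI exI[of _ "a # xs"]) simp
    then show "a * b \<in> VR.span {prod_list xs | xs. length xs = Suc k \<and> set xs \<subseteq> W0}"
      by (rule VR.span_base)
  qed
  have mult_step: "sl_mult \<sigma> x y \<in> Qk (Suc k)" if x: "x \<in> X" and y: "y \<in> Qk k" for x y k
  proof -
    have val: "sl_mult \<sigma> x y n = (\<Sum>i\<in>{i. x i \<noteq> 0}. x i * zpow \<sigma> i (y (n - i)))" for n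
      by (simp add: sl_mult_def)
    have "sl_mult \<sigma> x y n \<in> Pk (Suc k)" for n
      unfolding val Pk_def
    proof (rule VR.span_sum)
      fix i assume "i \<in> {i. x i \<noteq> 0}"
      have "x i * zpow \<sigma> i (y (n - i)) \<in> Pk (Suc k)"
        using x y by (intro Pmult Pstab) (auto simp: X_def Qk_def)
      then show "x i * zpow \<sigma> i (y (n - i)) \<in> VR.span {prod_list xs | xs. length xs = Suc k \<and> set xs \<subseteq> W0}"
        by (simp add: Pk_def)
    qed
    moreover have "\<bar>n\<bar> \<le> int (N * Suc k)" if nz: "sl_mult \<sigma> x y n \<noteq> 0" for n
    proof -
      obtain i where i: "i \<in> {i. x i \<noteq> 0}" "x i * zpow \<sigma> i (y (n - i)) \<noteq> 0"
        using nz unfolding val by (meson sum.neutral)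
      then have "y (n - i) \<noteq> 0" using z0 by auto
      then have "\<bar>n - i\<bar> \<le> int (N * k)" using y by (auto simp: Qk_def)
      moreover have "\<bar>i\<bar> \<le> int N" using i x by (auto simp: X_def)
      ultimately show ?thesis by (simp add: algebra_simps)
    qed
    ultimately show ?thesis by (auto simp: Qk_def)
  qed
  have VspX: "Vsp \<subseteq> X" unfolding Vsp_def
  proof (rule VF.span_minimal[OF _ subX], rule subsetI)
    fix f assume "f \<in> insert sl_one F"
    then show "f \<in> X"
    proof
      assume "f = sl_one"
      have "1 \<in> W0" using CoefW0 by (auto simp: Coef_def)
      moreover have "0 \<in> W0" by (simp add: W0_def VR.span_zero)
      ultimately show "f \<in> X" using \<open>f = sl_one\<close> by (auto simp: X_def sl_one_def)
    next
      assume fF': "f \<in> F"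
      have "f n \<in> W0" for n
      proof (cases "f n = 0")
        case True then show ?thesis by (simp add: W0_def VR.span_zero)
      next
        case False then have "f n \<in> Coef" using fF' by (auto simp: Coef_def)
        then show ?thesis using CoefW0 by auto
      qed
      then show "f \<in> X" using Nb fF' by (auto simp: X_def)
    qed
  qed
  have foldQ: "foldr (sl_mult \<sigma>) xs sl_one \<in> Qk (length xs)" if "set xs \<subseteq> Vsp" for xs
    using that
  proof (induction xs)
    case Nil
    have "1 \<in> Pk 0" unfolding Pk_def by (rule VR.span_base) (auto intro!: exI[of _ "[]"])
    moreover have "0 \<in> Pk 0" unfolding Pk_def by (rule VR.span_zero)
    ultimately show ?case by (auto simp: Qk_def sl_one_def)
  next
    case (Cons a xs)
    then have "a \<in> X" "foldr (sl_mult \<sigma>) xs sl_one \<in> Qk (length xs)" using VspX by auto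
    then show ?case using mult_step by simp
  qed
  define pw where "pw m = pow_space (sl_scale \<iota>) (sl_mult \<sigma>) sl_one Vsp m" for m
  have powQ: "pw m \<subseteq> Qk m" for m
    unfolding pw_def pow_space_def
    by (rule VF.span_minimal[OF _ subQ]) (use foldQ in auto)
  obtain S where ind: "alg_indep (frac_emb \<iota>) S" and cS: "card S = d"
    and mx: "\<forall>y. y \<notin> S \<longrightarrow> \<not> alg_indep (frac_emb \<iota>) (insert y S)"
    using tr by (auto simp: trdeg_eq_def)
  define Gs where "Gs = emb ` G"
  have fGs: "finite Gs" using fG by (simp add: Gs_def)
  obtain C Ab Zc Tf where C0: "C \<noteq> 0" and fcT: "\<forall>m. finite (Tf m) \<and> card (Tf m) \<le> Zc * (Ab * m + 1) ^ card S"
    and core': "\<forall>xs. set xs \<subseteq> Gs \<longrightarrow> C ^ length xs * prod_list xs \<in> VK.span (Tf (length xs))"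
    using core_bound[OF hK ind mx fGs] by (elim exE conjE)
  have fT: "\<And>m. finite (Tf m)" and cT: "\<And>m. card (Tf m) \<le> Zc * (Ab * m + 1) ^ card S"
    using fcT by auto
  have core: "\<And>xs. set xs \<subseteq> Gs \<Longrightarrow> C ^ length xs * prod_list xs \<in> VK.span (Tf (length xs))"
    using core' by auto
  have Klem: "emb p * C ^ m \<in> VK.span (Tf m)" if p: "p \<in> Pk m" for p m
  proof -
    have PkG: "Pk m \<subseteq> VR.span {prod_list ys | ys. length ys = m \<and> set ys \<subseteq> G}"
      unfolding Pk_def
    proof (rule VR.span_minimal[OF _ VR.subspace_span], rule subsetI)
      fix z assume "z \<in> {prod_list xs | xs. length xs = m \<and> set xs \<subseteq> W0}"
      then obtain xs where z: "z = prod_list xs" "length xs = m" "set xs \<subseteq> W0" by auto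
      have "set xs \<subseteq> VR.span G" using z W0G by auto
      from span_prod_lists[OF h\<iota> this] z
      show "z \<in> VR.span {prod_list ys | ys. length ys = m \<and> set ys \<subseteq> G}" by simp
    qed
    have "p \<in> VR.span {prod_list ys | ys. length ys = m \<and> set ys \<subseteq> G}" using p PkG by auto
    then show ?thesis
    proof (induction p rule: VR.span_induct_alt)
      case base then show ?case by (simp add: emb_zero VK.span_zero)
    next
      case (step c x y)
      then obtain ys where x: "x = prod_list ys" "length ys = m" "set ys \<subseteq> G" by auto
      have e1: "emb x * C ^ m = C ^ length (map emb ys) * prod_list (map emb ys)"
        using x by (simp add: emb_prod_list mult.commute)
      have "set (map emb ys) \<subseteq> Gs" using x by (auto simp: Gs_def)
      then have "C ^ length (map emb ys) * prod_list (map emb ys) \<in> VK.span (Tf (length (map emb ys)))"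
        by (rule core)
      then have ex: "emb x * C ^ m \<in> VK.span (Tf m)" by (simp only: e1 length_map x(2))
      have eq: "emb (kscale \<iota> c x + y) * C ^ m = kscale (frac_emb \<iota>) c (emb x * C ^ m) + emb y * C ^ m"
        by (simp add: kscale_def emb_add emb_mult frac_emb_emb algebra_simps)
      show ?case unfolding eq by (rule VK.span_add[OF VK.span_scale[OF ex] step.IH])
    qed
  qed
  define \<Phi> where "\<Phi> m f = (\<lambda>n. emb (f n) * C ^ m)" for m and f :: "int \<Rightarrow> 'r"
  have MH: "module_hom (sl_scale \<iota>) (sl_scale (frac_emb \<iota>)) (\<Phi> m)" for m
    unfolding module_hom_def module_hom_axioms_def module_iff_vector_space
    using vs_sl[OF h\<iota>] vs_sl[OF hK]
    by (auto simp: \<Phi>_def fun_eq_iff plus_fun_def sl_scale_def emb_add emb_mult frac_emb_emb algebra_simps)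
  have injP: "inj (\<Phi> m)" for m
  proof (rule injI)
    fix f g assume "\<Phi> m f = \<Phi> m g"
    then have "\<Phi> m f n = \<Phi> m g n" for n by simp
    then have "emb (f n) * C ^ m = emb (g n) * C ^ m" for n unfolding \<Phi>_def .
    then have "emb (f n) = emb (g n)" for n using C0 by simp
    then show "f = g" by (simp add: emb_inj fun_eq_iff)
  qed
  define I where "I m = {- int (N * m)..int (N * m)}" for m
  define Tset where "Tset m = {smono t i | t i. t \<in> Tf m \<and> i \<in> I m}" for m
  have cTs: "finite (Tset m) \<and> card (Tset m) \<le> card (Tf m) * card (I m)" for m
    unfolding Tset_def by (rule card_monos[OF hK]) (simp_all add: I_def fT)
  have cI: "card (I m) = 2 * N * m + 1" for m
    unfolding I_def by (simp add: nat_eq_iff)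
  have PhiQ: "\<Phi> m f \<in> VKF.span (Tset m)" if f: "f \<in> Qk m" for f m
    unfolding Tset_def
  proof (rule fun_span[OF hK])
    show "finite (I m)" by (simp add: I_def)
    show "\<forall>n. n \<notin> I m \<longrightarrow> \<Phi> m f n = 0"
    proof (intro allI impI)
      fix n assume "n \<notin> I m"
      then have "\<not> \<bar>n\<bar> \<le> int (N * m)" by (auto simp: I_def)
      then have "f n = 0" using f by (auto simp: Qk_def)
      then show "\<Phi> m f n = 0" by (simp add: \<Phi>_def emb_zero)
    qed
    show "\<forall>n\<in>I m. \<Phi> m f n \<in> VK.span (Tf m)"
      using f Klem by (auto simp: \<Phi>_def Qk_def)
  qed
  define c where "c = Zc * (Ab + 1) ^ d * (2 * N + 1)"
  show ?thesis
  proof (rule exI[of _ c], rule allI)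
    fix m
    obtain B where B: "B \<subseteq> pw m" "VF.independent B" "pw m \<subseteq> VF.span B" "card B = VF.dim (pw m)"
      by (rule VF.basis_exists)
    interpret PH: module_hom "sl_scale \<iota>" "sl_scale (frac_emb \<iota>)" "\<Phi> m" by (rule MH)
    have indP: "VKF.independent (\<Phi> m ` B)"
      by (rule PH.independent_injective_image[OF B(2)]) (use injP in \<open>simp add: inj_on_def\<close>)
    have subP: "\<Phi> m ` B \<subseteq> VKF.span (Tset m)"
    proof
      fix y assume "y \<in> \<Phi> m ` B"
      then obtain f where f: "f \<in> B" "y = \<Phi> m f" by auto
      then have "f \<in> Qk m" using B(1) powQ[of m] by auto
      then show "y \<in> VKF.span (Tset m)" using f(2) PhiQ by simp
    qed
    have bnd: "finite (\<Phi> m ` B) \<and> card (\<Phi> m ` B) \<le> card (Tset m)"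
    proof (rule VKF.independent_span_bound[OF _ indP subP])
      show "finite (Tset m)" using cTs by simp
    qed
    have injB: "inj_on (\<Phi> m) B" using injP by (simp add: inj_on_def)
    have fB: "finite B" using bnd finite_imageD[OF _ injB] by blast
    have cB: "card B = card (\<Phi> m ` B)" by (simp add: card_image[OF injB])
    have "card B \<le> Zc * (Ab * m + 1) ^ d * (2 * N * m + 1)"
    proof -
      have "card B \<le> card (Tset m)" using cB bnd by simp
      also have "\<dots> \<le> card (Tf m) * card (I m)" using cTs by simp
      finally have "card B \<le> card (Tf m) * card (I m)" .
      also have "\<dots> \<le> Zc * (Ab * m + 1) ^ d * (2 * N * m + 1)"
        unfolding cI[of m] using cT[of m] cS by (intro mult_right_mono) simp_all
      finally show ?thesis .
    qed
    also have "\<dots> \<le> c * (m + 1) ^ (d + 1)"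
    proof -
      have a1: "Ab * m + 1 \<le> (Ab + 1) * (m + 1)" by (simp add: algebra_simps)
      have a2: "2 * N * m + 1 \<le> (2 * N + 1) * (m + 1)" by (simp add: algebra_simps)
      have "(Ab * m + 1) ^ d \<le> ((Ab + 1) * (m + 1)) ^ d" by (rule power_mono[OF a1]) simp
      then have "Zc * (Ab * m + 1) ^ d * (2 * N * m + 1) \<le> Zc * ((Ab + 1) * (m + 1)) ^ d * ((2 * N + 1) * (m + 1))"
        using a2 by (intro mult_mono) auto
      also have "\<dots> = c * (m + 1) ^ (d + 1)" unfolding c_def power_mult_distrib power_add power_one_right by (simp only: mult_ac)
      finally show ?thesis .
    qed
    finally have "card B \<le> c * (m + 1) ^ (d + 1)" .
    then show "\<exists>B. finite B \<and> VF.independent B \<and> pow_space (sl_scale \<iota>) (sl_mult \<sigma>) sl_one (VF.span (insert sl_one F)) m \<subseteq> VF.span B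
      \<and> card B = VF.dim (pow_space (sl_scale \<iota>) (sl_mult \<sigma>) sl_one (VF.span (insert sl_one F)) m)
      \<and> card B \<le> c * (m + 1) ^ (d + 1)"
      apply (intro exI[of _ B])
      using fB B by (simp add: pw_def Vsp_def)
  qed
qed

lemma zero_BR_I: "0 \<in> BR_I \<sigma> H J n"
  unfolding BR_I_def ideal_prod_def by (auto intro!: exI[of _ "[]"])

lemma smono_in_BR: "a \<in> BR_I \<sigma> H J i \<Longrightarrow> smono a i \<in> BR_alg \<sigma> H J"
  unfolding BR_alg_def skew_laurent_def smono_def
  by (auto simp: zero_BR_I intro: finite_subset[of _ "{i}"])

lemma foldr_R:
  assumes "k_aut \<iota> \<sigma>"
  shows "foldr (sl_mult \<sigma>) (map (\<lambda>a. smono a 0) as) (smono c j) = smono (prod_list as * c) j"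
  by (induction as) (simp_all add: sl_mult_mono[OF assms] mult.assoc)

lemma foldr_one:
  assumes "k_aut \<iota> \<sigma>"
  shows "foldr (sl_mult \<sigma>) (replicate r sl_one) (smono c j) = smono c j"
  by (induction r) (simp_all add: sl_one_mono sl_mult_mono[OF assms])

lemma foldr_u:
  fixes \<sigma> :: "'r::idom \<Rightarrow> 'r"
  assumes aut: "k_aut \<iota> \<sigma>" and u: "u \<noteq> 0"
  shows "\<exists>c. c \<noteq> 0 \<and> foldr (sl_mult \<sigma>) (replicate n (smono u 1)) sl_one = smono c (int n)"
proof (induction n)
  case 0 then show ?case by (intro exI[of _ 1]) (simp add: sl_one_mono)
next
  case (Suc n)
  then obtain c where c: "c \<noteq> 0" "foldr (sl_mult \<sigma>) (replicate n (smono u 1)) sl_one = smono c (int n)"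
    by blast
  have h: "hm \<iota> \<sigma>" by (rule kaut_hm[OF aut])
  have "\<sigma> c \<noteq> 0"
  proof
    assume "\<sigma> c = 0"
    then have "\<sigma> c = \<sigma> 0" using hm_0[OF h] by simp
    then show False using c(1) h by (auto simp: hm_def inj_def)
  qed
  then have "u * \<sigma> c \<noteq> 0" using u by simp
  moreover have "foldr (sl_mult \<sigma>) (replicate (Suc n) (smono u 1)) sl_one = smono (u * \<sigma> c) (int (Suc n))"
    using c(2) by (simp add: sl_mult_mono[OF aut] add.commute)
  ultimately show ?case by blast
qed

lemma prod_list_concat_map: "prod_list (concat (map f xs)) = prod_list (map (\<lambda>x. prod_list (f x)) xs)"
  by (induction xs) simp_all

lemma box_card:
  assumes fS: "finite S"
  shows "card {\<gamma>::'a \<Rightarrow> nat. (\<forall>x. x \<notin> S \<longrightarrow> \<gamma> x = 0) \<and> (\<forall>x\<in>S. \<gamma> x \<le> q)} = (q + 1) ^ card S"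
    and "finite {\<gamma>::'a \<Rightarrow> nat. (\<forall>x. x \<notin> S \<longrightarrow> \<gamma> x = 0) \<and> (\<forall>x\<in>S. \<gamma> x \<le> q)}"
proof -
  define r where "r f = (\<lambda>x. if x \<in> S then f x else 0::nat)" for f :: "'a \<Rightarrow> nat"
  have eq: "{\<gamma>::'a \<Rightarrow> nat. (\<forall>x. x \<notin> S \<longrightarrow> \<gamma> x = 0) \<and> (\<forall>x\<in>S. \<gamma> x \<le> q)} = r ` PiE S (\<lambda>_. {..q})"
  proof (rule set_eqI, rule iffI)
    fix \<gamma> :: "'a \<Rightarrow> nat" assume g: "\<gamma> \<in> {\<gamma>. (\<forall>x. x \<notin> S \<longrightarrow> \<gamma> x = 0) \<and> (\<forall>x\<in>S. \<gamma> x \<le> q)}"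
    show "\<gamma> \<in> r ` PiE S (\<lambda>_. {..q})"
    proof (rule image_eqI[of _ _ "restrict \<gamma> S"])
      show "\<gamma> = r (restrict \<gamma> S)" using g by (auto simp: r_def)
      show "restrict \<gamma> S \<in> PiE S (\<lambda>_. {..q})" using g by auto
    qed
  next
    fix \<gamma> assume "\<gamma> \<in> r ` PiE S (\<lambda>_. {..q})"
    then show "\<gamma> \<in> {\<gamma>::'a \<Rightarrow> nat. (\<forall>x. x \<notin> S \<longrightarrow> \<gamma> x = 0) \<and> (\<forall>x\<in>S. \<gamma> x \<le> q)}"
      by (auto simp: r_def PiE_def Pi_def)
  qed
  have inj: "inj_on r (PiE S (\<lambda>_. {..q}))"
  proof (rule inj_onI)
    fix f g assume f: "f \<in> PiE S (\<lambda>_. {..q})" and g: "g \<in> PiE S (\<lambda>_. {..q})" and e: "r f = r g"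
    show "f = g"
    proof (rule PiE_ext[OF f g])
      fix x assume "x \<in> S" then show "f x = g x" using fun_cong[OF e, of x] by (simp add: r_def)
    qed
  qed
  show "card {\<gamma>::'a \<Rightarrow> nat. (\<forall>x. x \<notin> S \<longrightarrow> \<gamma> x = 0) \<and> (\<forall>x\<in>S. \<gamma> x \<le> q)} = (q + 1) ^ card S"
    unfolding eq by (simp add: card_image[OF inj] card_PiE fS)
  show "finite {\<gamma>::'a \<Rightarrow> nat. (\<forall>x. x \<notin> S \<longrightarrow> \<gamma> x = 0) \<and> (\<forall>x\<in>S. \<gamma> x \<le> q)}"
    unfolding eq by (simp add: fS finite_PiE)
qed

lemma lower_main:
  fixes \<iota> :: "'k::field \<Rightarrow> 'r::idom" and \<sigma> :: "'r \<Rightarrow> 'r"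
  assumes h\<iota>: "kalg_hom \<iota>" and aut: "k_aut \<iota> \<sigma>" and tr: "trdeg_eq (frac_emb \<iota>) d"
    and BRne: "\<forall>n. BR_I \<sigma> H J n \<noteq> {0}"
  shows "\<exists>F. finite F \<and> F \<subseteq> BR_alg \<sigma> H J \<and> (\<forall>m. \<exists>T.
     T \<subseteq> pow_space (sl_scale \<iota>) (sl_mult \<sigma>) sl_one (module.span (sl_scale \<iota>) (insert sl_one F)) m
     \<and> module.independent (sl_scale \<iota>) T \<and> card T = (m div (d + 1) + 1) ^ (d + 1))"
proof -
  interpret VF: vector_space "sl_scale \<iota>" by (rule vs_sl[OF h\<iota>])
  have hK: "kalg_hom (frac_emb \<iota>)" by (rule kalg_frac[OF h\<iota>])
  obtain S where ind: "alg_indep (frac_emb \<iota>) S" and cS: "card S = d"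
    using tr by (auto simp: trdeg_eq_def)
  have fS: "finite S" using ind by (simp add: alg_indep_def)
  have AI: "\<And>E c. finite E \<Longrightarrow> (\<forall>e\<in>E. \<forall>x. x \<notin> S \<longrightarrow> e x = 0) \<Longrightarrow>
      (\<Sum>e\<in>E. frac_emb \<iota> (c e) * (\<Prod>x\<in>S. x ^ e x)) = 0 \<Longrightarrow> \<forall>e\<in>E. c e = 0"
    using ind unfolding alg_indep_def by blast
  define ab where "ab x = (SOME p. snd p \<noteq> 0 \<and> x = Fract (fst p) (snd p))" for x :: "'r fract"
  have ab0: "snd (ab x) \<noteq> 0 \<and> x = Fract (fst (ab x)) (snd (ab x))" for x
  proof -
    have "\<exists>p. snd p \<noteq> 0 \<and> x = Fract (fst p) (snd p)" by (cases x) auto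
    then show ?thesis unfolding ab_def by (rule someI_ex)
  qed
  have ab: "\<And>x. snd (ab x) \<noteq> 0" "\<And>x. x = Fract (fst (ab x)) (snd (ab x))" using ab0 by simp_all
  define nu where "nu x = fst (ab x)" for x
  define de where "de x = snd (ab x)" for x
  have de0: "de x \<noteq> 0" for x using ab(1) by (simp add: de_def)
  have xnd: "x = Fract (nu x) (de x)" for x using ab(2) by (simp add: nu_def de_def)
  define bb where "bb = (\<Prod>x\<in>S. de x)"
  have bb0: "bb \<noteq> 0" unfolding bb_def using de0 fS by simp
  define ax where "ax x = nu x * (\<Prod>y\<in>S - {x}. de y)" for x
  have emb_ax: "emb (ax x) = x * emb bb" if "x \<in> S" for x
  proof -
    have bbx: "bb = de x * (\<Prod>y\<in>S - {x}. de y)" unfolding bb_def using fS that by (simp add: prod.remove)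
    have "x * emb bb = Fract (nu x * bb) (de x)" by (subst xnd) (simp add: emb_def)
    also have "\<dots> = Fract (ax x) 1" using de0[of x] by (simp add: eq_fract ax_def bbx algebra_simps)
    finally show ?thesis by (simp add: emb_def)
  qed
  obtain u where u: "u \<in> BR_I \<sigma> H J 1" "u \<noteq> 0"
  proof -
    have "BR_I \<sigma> H J 1 \<noteq> {0}" using BRne by blast
    moreover have "0 \<in> BR_I \<sigma> H J 1" by (rule zero_BR_I)
    ultimately obtain u where "u \<in> BR_I \<sigma> H J 1" "u \<noteq> 0" by blast
    then show ?thesis using that by blast
  qed
  define F where "F = insert (smono bb 0) (insert (smono u 1) ((\<lambda>x. smono (ax x) 0) ` S))"
  have fF: "finite F" using fS by (simp add: F_def)
  have FBR: "F \<subseteq> BR_alg \<sigma> H J"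
  proof -
    have z: "BR_I \<sigma> H J 0 = UNIV" by (simp add: BR_I_def)
    have "smono a 0 \<in> BR_alg \<sigma> H J" for a by (rule smono_in_BR) (simp add: z)
    moreover have "smono u 1 \<in> BR_alg \<sigma> H J" by (rule smono_in_BR[OF u(1)])
    ultimately show ?thesis unfolding F_def by auto
  qed
  obtain slist where sl: "set slist = S" "distinct slist" using finite_distinct_list[OF fS] by blast
  have "\<forall>n::nat. \<exists>c. c \<noteq> 0 \<and> foldr (sl_mult \<sigma>) (replicate n (smono u 1)) sl_one = smono c (int n)"
    using foldr_u[OF aut u(2)] by blast
  from choice[OF this] obtain Cn where Cn: "\<And>n. Cn n \<noteq> 0"
    "\<And>n. foldr (sl_mult \<sigma>) (replicate n (smono u 1)) sl_one = smono (Cn n) (int n)" by blast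
  have f1: "frac_emb \<iota> 1 = 1" using hK by (simp add: kalg_hom_def)
  have fm1: "frac_emb \<iota> (-1) = -1"
  proof -
    have "frac_emb \<iota> (-1) + frac_emb \<iota> 1 = frac_emb \<iota> 0" using hK unfolding kalg_hom_def by (metis add.left_inverse)
    then show ?thesis using f1 kalg_hom_0[OF hK] by (simp add: eq_neg_iff_add_eq_0)
  qed
  show ?thesis
  proof (rule exI[of _ F], intro conjI fF FBR allI)
    fix m
    define q where "q = m div (d + 1)"
    define Box where "Box = {\<gamma>::'r fract \<Rightarrow> nat. (\<forall>x. x \<notin> S \<longrightarrow> \<gamma> x = 0) \<and> (\<forall>x\<in>S. \<gamma> x \<le> q)}"
    have fBox: "finite Box" and cBox: "card Box = (q + 1) ^ d"
      using box_card[OF fS, of q] cS by (simp_all add: Box_def)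
    have sumB: "sum \<gamma> S \<le> d * q" if "\<gamma> \<in> Box" for \<gamma>
    proof -
      have "sum \<gamma> S \<le> sum (\<lambda>_. q) S" using that by (intro sum_mono) (auto simp: Box_def)
      then show ?thesis using cS by simp
    qed
    define Rco where "Rco \<gamma> = concat (map (\<lambda>x. replicate (\<gamma> x) (ax x)) slist) @ replicate (d * q - sum \<gamma> S) bb" for \<gamma>
    have lenR: "length (Rco \<gamma>) = d * q" if "\<gamma> \<in> Box" for \<gamma>
    proof -
      have "length (concat (map (\<lambda>x. replicate (\<gamma> x) (ax x)) slist)) = sum_list (map \<gamma> slist)"
        by (simp add: length_concat comp_def)
      also have "\<dots> = sum \<gamma> S" using sum.distinct_set_conv_list[OF sl(2), of \<gamma>] sl(1) by simp
      finally show ?thesis using sumB[OF that] by (simp add: Rco_def)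
    qed
    define M where "M \<gamma> = prod_list (Rco \<gamma>)" for \<gamma>
    have embM: "emb (M \<gamma>) = emb bb ^ (d * q) * mon S \<gamma>" if "\<gamma> \<in> Box" for \<gamma>
    proof -
      have "prod_list (concat (map (\<lambda>x. replicate (\<gamma> x) (ax x)) slist)) = (\<Prod>x\<in>S. ax x ^ \<gamma> x)"
        using prod.distinct_set_conv_list[OF sl(2), of "\<lambda>x. ax x ^ \<gamma> x"] sl(1)
        by (simp add: prod_list_concat_map comp_def)
      then have "emb (M \<gamma>) = (\<Prod>x\<in>S. emb (ax x) ^ \<gamma> x) * emb bb ^ (d * q - sum \<gamma> S)"
        by (simp add: M_def Rco_def emb_mult emb_prod emb_power)
      also have "(\<Prod>x\<in>S. emb (ax x) ^ \<gamma> x) = (\<Prod>x\<in>S. x ^ \<gamma> x) * emb bb ^ sum \<gamma> S"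
      proof -
        have "(\<Prod>x\<in>S. emb (ax x) ^ \<gamma> x) = (\<Prod>x\<in>S. x ^ \<gamma> x * emb bb ^ \<gamma> x)"
          by (rule prod.cong) (simp_all add: emb_ax power_mult_distrib)
        also have "\<dots> = (\<Prod>x\<in>S. x ^ \<gamma> x) * (\<Prod>x\<in>S. emb bb ^ \<gamma> x)" by (rule prod.distrib)
        also have "(\<Prod>x\<in>S. emb bb ^ \<gamma> x) = emb bb ^ sum \<gamma> S" by (rule power_sum[symmetric])
        finally show ?thesis .
      qed
      finally have "emb (M \<gamma>) = mon S \<gamma> * (emb bb ^ sum \<gamma> S * emb bb ^ (d * q - sum \<gamma> S))"
        by (simp add: mon_def mult.assoc)
      also have "\<dots> = mon S \<gamma> * emb bb ^ (d * q)" using sumB[OF that] by (simp flip: power_add)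
      finally show ?thesis by (simp add: mult.commute)
    qed
    have monne: "mon S \<gamma> \<noteq> 0" if "\<gamma> \<in> Box" for \<gamma>
    proof
      assume z: "mon S \<gamma> = 0"
      have "(\<Sum>e\<in>{\<gamma>}. frac_emb \<iota> ((\<lambda>_. 1) e) * (\<Prod>x\<in>S. x ^ e x)) = 0" using z f1 by (simp add: mon_def)
      moreover have "\<forall>e\<in>{\<gamma>}. \<forall>x. x \<notin> S \<longrightarrow> e x = 0" using that by (simp add: Box_def)
      ultimately have "\<forall>e\<in>{\<gamma>}. (\<lambda>_. 1::'k) e = 0" by (intro AI) simp_all
      then show False by simp
    qed
    have Mne: "M \<gamma> \<noteq> 0" if "\<gamma> \<in> Box" for \<gamma>
    proof -
      have "emb bb \<noteq> 0" using bb0 by (simp add: emb_eq0)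
      then have "emb (M \<gamma>) \<noteq> 0" using embM[OF that] monne[OF that] by simp
      then show ?thesis by (auto simp: emb_zero)
    qed
    have monI: "\<gamma> = \<gamma>'" if "\<gamma> \<in> Box" "\<gamma>' \<in> Box" "mon S \<gamma> = mon S \<gamma>'" for \<gamma> \<gamma>'
    proof (rule ccontr)
      assume ne: "\<gamma> \<noteq> \<gamma>'"
      define c where "c e = (if e = \<gamma> then 1 else -1::'k)" for e
      have "(\<Sum>e\<in>{\<gamma>, \<gamma>'}. frac_emb \<iota> (c e) * (\<Prod>x\<in>S. x ^ e x)) = mon S \<gamma> - mon S \<gamma>'"
        using ne f1 fm1 by (simp add: c_def mon_def)
      then have "(\<Sum>e\<in>{\<gamma>, \<gamma>'}. frac_emb \<iota> (c e) * (\<Prod>x\<in>S. x ^ e x)) = 0" using that(3) by simp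
      moreover have "\<forall>e\<in>{\<gamma>, \<gamma>'}. \<forall>x. x \<notin> S \<longrightarrow> e x = 0" using that by (simp add: Box_def)
      ultimately have "\<forall>e\<in>{\<gamma>, \<gamma>'}. c e = 0" by (intro AI) simp_all
      then show False by (simp add: c_def)
    qed
    define \<psi> where "\<psi> p = smono (M (snd p) * Cn (fst p)) (int (fst p))" for p
    define Idx where "Idx = {..q} \<times> Box"
    define T where "T = \<psi> ` Idx"
    have psi_at: "\<psi> (n, \<gamma>) (int n0) = (if n = n0 then M \<gamma> * Cn n0 else 0)" for n \<gamma> n0
      by (simp add: \<psi>_def smono_def)
    have injpsi: "inj_on \<psi> Idx"
    proof (rule inj_onI)
      fix p p' assume p: "p \<in> Idx" and p': "p' \<in> Idx" and e: "\<psi> p = \<psi> p'"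
      obtain n \<gamma> where pn: "p = (n, \<gamma>)" by (cases p)
      obtain n' \<gamma>' where pn': "p' = (n', \<gamma>')" by (cases p')
      have g: "\<gamma> \<in> Box" "\<gamma>' \<in> Box" using p p' pn pn' by (auto simp: Idx_def)
      have "\<psi> (n, \<gamma>) (int n) = \<psi> (n', \<gamma>') (int n)" using e pn pn' by simp
      then have e2: "M \<gamma> * Cn n = (if n' = n then M \<gamma>' * Cn n else 0)" by (simp add: psi_at)
      have "M \<gamma> * Cn n \<noteq> 0" using Mne[OF g(1)] Cn(1) by simp
      then have nn: "n' = n" using e2 by (auto split: if_splits)
      then have "M \<gamma> = M \<gamma>'" using e2 Cn(1)[of n] by simp
      then have "emb (M \<gamma>) = emb (M \<gamma>')" by simp
      then have "emb bb ^ (d * q) * mon S \<gamma> = emb bb ^ (d * q) * mon S \<gamma>'" using embM g by simp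
      moreover have "emb bb \<noteq> 0" using bb0 by (simp add: emb_eq0)
      ultimately have "mon S \<gamma> = mon S \<gamma>'" by simp
      then have "\<gamma> = \<gamma>'" using monI[OF g] by simp
      then show "p = p'" using pn pn' nn by simp
    qed
    have fIdx: "finite Idx" using fBox by (simp add: Idx_def)
    have cT: "card T = (m div (d + 1) + 1) ^ (d + 1)"
    proof -
      have "card T = card Idx" unfolding T_def by (rule card_image[OF injpsi])
      also have "\<dots> = (q + 1) * (q + 1) ^ d" by (simp add: Idx_def card_cartesian_product cBox)
      finally show ?thesis by (simp add: q_def)
    qed
    have Tpow: "T \<subseteq> pow_space (sl_scale \<iota>) (sl_mult \<sigma>) sl_one (VF.span (insert sl_one F)) m"
    proof
      fix v assume "v \<in> T"
      then obtain n \<gamma> where v: "v = \<psi> (n, \<gamma>)" "n \<le> q" "\<gamma> \<in> Box" by (auto simp: T_def Idx_def)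
      define L where "L = map (\<lambda>a. smono a 0) (Rco \<gamma>) @ replicate n (smono u 1) @ replicate (m - d * q - n) sl_one"
      have qm: "(d + 1) * q \<le> m" unfolding q_def by (metis div_times_less_eq_dividend mult.commute)
      have lenL: "length L = m" unfolding L_def using lenR[OF v(3)] v(2) qm by (simp add: algebra_simps)
      have setR: "set (Rco \<gamma>) \<subseteq> insert bb (ax ` S)" unfolding Rco_def using sl by auto
      have setL: "set L \<subseteq> VF.span (insert sl_one F)"
      proof -
        have "set L \<subseteq> insert sl_one F" unfolding L_def F_def using setR by auto
        then show ?thesis using VF.span_superset by blast
      qed
      have "foldr (sl_mult \<sigma>) L sl_one = v"
      proof -
        have a: "foldr (sl_mult \<sigma>) (replicate (m - d * q - n) sl_one) sl_one = sl_one"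
          using foldr_one[OF aut, of _ 1 0] by (simp add: sl_one_mono)
        have "foldr (sl_mult \<sigma>) L sl_one = foldr (sl_mult \<sigma>) (map (\<lambda>a. smono a 0) (Rco \<gamma>))
            (foldr (sl_mult \<sigma>) (replicate n (smono u 1)) sl_one)"
          unfolding L_def by (simp only: foldr_append o_apply a)
        also have "\<dots> = smono (M \<gamma> * Cn n) (int n)" by (simp only: Cn(2) foldr_R[OF aut] M_def)
        finally show ?thesis using v(1) by (simp add: \<psi>_def)
      qed
      show "v \<in> pow_space (sl_scale \<iota>) (sl_mult \<sigma>) sl_one (VF.span (insert sl_one F)) m"
        unfolding pow_space_def
      proof (rule VF.span_base)
        show "v \<in> {foldr (sl_mult \<sigma>) xs sl_one |xs. length xs = m \<and> set xs \<subseteq> VF.span (insert sl_one F)}"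
          using lenL setL \<open>foldr (sl_mult \<sigma>) L sl_one = v\<close> by (intro CollectI exI[of _ L]) simp
      qed
    qed
    have indT: "VF.independent T"
    proof (rule VF.independent_if_scalars_zero)
      show "finite T" using fIdx by (simp add: T_def)
    next
      fix f v assume s0: "(\<Sum>x\<in>T. sl_scale \<iota> (f x) x) = 0" and vT: "v \<in> T"
      obtain n0 \<gamma>0 where v: "v = \<psi> (n0, \<gamma>0)" "n0 \<le> q" "\<gamma>0 \<in> Box" using vT by (auto simp: T_def Idx_def)
      define c where "c \<gamma> = f (\<psi> (n0, \<gamma>))" for \<gamma>
      have "(\<Sum>p\<in>Idx. sl_scale \<iota> (f (\<psi> p)) (\<psi> p)) = 0"
        using s0 unfolding T_def by (simp add: sum.reindex[OF injpsi])
      then have "(\<Sum>p\<in>Idx. sl_scale \<iota> (f (\<psi> p)) (\<psi> p)) (int n0) = 0" by simp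
      then have "(\<Sum>p\<in>Idx. \<iota> (f (\<psi> p)) * \<psi> p (int n0)) = 0"
        by (simp add: fun_sum_apply sl_scale_def)
      then have "(\<Sum>n\<in>{..q}. \<Sum>\<gamma>\<in>Box. \<iota> (f (\<psi> (n, \<gamma>))) * \<psi> (n, \<gamma>) (int n0)) = 0"
        unfolding Idx_def by (simp add: sum.cartesian_product)
      then have "(\<Sum>n\<in>{..q}. if n = n0 then (\<Sum>\<gamma>\<in>Box. \<iota> (c \<gamma>) * (M \<gamma> * Cn n0)) else 0) = 0"
      proof -
        have inner: "(\<Sum>\<gamma>\<in>Box. \<iota> (f (\<psi> (n, \<gamma>))) * \<psi> (n, \<gamma>) (int n0))
            = (if n = n0 then (\<Sum>\<gamma>\<in>Box. \<iota> (c \<gamma>) * (M \<gamma> * Cn n0)) else 0)" for n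
          by (cases "n = n0") (simp_all add: psi_at c_def)
        show ?thesis using \<open>(\<Sum>n\<in>{..q}. \<Sum>\<gamma>\<in>Box. \<iota> (f (\<psi> (n, \<gamma>))) * \<psi> (n, \<gamma>) (int n0)) = 0\<close>
          by (simp only: inner)
      qed
      then have "(\<Sum>\<gamma>\<in>Box. \<iota> (c \<gamma>) * M \<gamma>) * Cn n0 = 0"
        using v(2) by (simp add: sum_distrib_right mult.assoc del: sum.atMost_Suc)
      then have "(\<Sum>\<gamma>\<in>Box. \<iota> (c \<gamma>) * M \<gamma>) = 0" using Cn(1) by simp
      then have "emb (\<Sum>\<gamma>\<in>Box. \<iota> (c \<gamma>) * M \<gamma>) = 0" by (simp add: emb_zero)
      then have "(\<Sum>\<gamma>\<in>Box. frac_emb \<iota> (c \<gamma>) * (emb bb ^ (d * q) * mon S \<gamma>)) = 0"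
        by (simp add: emb_sum emb_mult embM frac_emb_emb)
      then have "emb bb ^ (d * q) * (\<Sum>\<gamma>\<in>Box. frac_emb \<iota> (c \<gamma>) * mon S \<gamma>) = 0"
        by (simp add: sum_distrib_left algebra_simps)
      moreover have "emb bb \<noteq> 0" using bb0 by (simp add: emb_eq0)
      ultimately have "(\<Sum>\<gamma>\<in>Box. frac_emb \<iota> (c \<gamma>) * (\<Prod>x\<in>S. x ^ \<gamma> x)) = 0" by (simp add: mon_def)
      moreover have "\<forall>e\<in>Box. \<forall>x. x \<notin> S \<longrightarrow> e x = 0" by (simp add: Box_def)
      ultimately have "\<forall>\<gamma>\<in>Box. c \<gamma> = 0" using fBox by (intro AI) simp_all
      then show "f v = 0" using v by (simp add: c_def)
    qed
    show "\<exists>T. T \<subseteq> pow_space (sl_scale \<iota>) (sl_mult \<sigma>) sl_one (VF.span (insert sl_one F)) m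
      \<and> VF.independent T \<and> card T = (m div (d + 1) + 1) ^ (d + 1)"
      using Tpow indT cT by (intro exI[of _ T]) simp
  qed
qed

lemma ln_bound_aux: assumes "2 \<le> m" shows "0 < ln (real m)"
  using assms by (intro ln_gt_zero) simp

lemma limsup_upper:
  fixes D :: "nat \<Rightarrow> nat" and c k :: nat
  assumes bd: "\<And>m. D m \<le> c * (m + 1) ^ k"
  shows "limsup (\<lambda>m. ereal (ln (real (D m)) / ln (real m))) \<le> ereal (real k)"
proof -
  define c' where "c' = real c + 1"
  have c'1: "1 \<le> c'" by (simp add: c'_def)
  define K where "K = ln c' + real k"
  define h where "h m = real k + K / ln (real m)" for m :: nat
  have ev: "eventually (\<lambda>m. ereal (ln (real (D m)) / ln (real m)) \<le> ereal (h m)) sequentially"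
    unfolding eventually_sequentially
  proof (intro exI[of _ 2] allI impI)
    fix m :: nat assume m2: "2 \<le> m"
    have lm: "0 < ln (real m)" using ln_bound_aux[OF m2] .
    have pos: "0 < c' * (real m + 1) ^ k" using c'1 by simp
    have ge1: "1 \<le> c' * (real m + 1) ^ k"
    proof -
      have "1 \<le> (real m + 1) ^ k" by (rule one_le_power) simp
      then show ?thesis using c'1 by (metis mult_mono' mult_1 zero_le_one)
    qed
    have D1: "real (D m) \<le> c' * (real m + 1) ^ k"
    proof -
      have "real (D m) \<le> real (c * (m + 1) ^ k)" using bd[of m] by linarith
      also have "\<dots> = real c * (real m + 1) ^ k" by (simp add: add.commute)
      also have "\<dots> \<le> c' * (real m + 1) ^ k" unfolding c'_def by (intro mult_right_mono) simp_all
      finally show ?thesis .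
    qed
    have lnD: "ln (real (D m)) \<le> ln (c' * (real m + 1) ^ k)"
    proof (cases "D m = 0")
      case True then show ?thesis using ge1 by simp
    next
      case False then show ?thesis using D1 by (subst ln_le_cancel_iff) simp_all
    qed
    have lm1: "ln (real m + 1) \<le> 1 + ln (real m)"
    proof -
      have "real m + 1 \<le> 2 * real m" using m2 by simp
      then have "ln (real m + 1) \<le> ln (2 * real m)" using m2 by (subst ln_le_cancel_iff) simp_all
      also have "\<dots> = ln 2 + ln (real m)" using m2 by (simp add: ln_mult)
      also have "\<dots> \<le> 1 + ln (real m)" using ln_2_less_1 by simp
      finally show ?thesis .
    qed
    have "ln (c' * (real m + 1) ^ k) = ln c' + real k * ln (real m + 1)"
      using c'1 by (simp add: ln_mult ln_realpow)
    also have "\<dots> \<le> ln c' + real k * (1 + ln (real m))"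
      using lm1 by (intro add_left_mono mult_left_mono) simp_all
    also have "\<dots> = K + real k * ln (real m)" by (simp add: K_def algebra_simps)
    finally have "ln (real (D m)) \<le> K + real k * ln (real m)" using lnD by simp
    then have "ln (real (D m)) / ln (real m) \<le> (K + real k * ln (real m)) / ln (real m)"
      using lm by (intro divide_right_mono) simp_all
    also have "\<dots> = h m" using lm by (simp add: h_def field_simps)
    finally show "ereal (ln (real (D m)) / ln (real m)) \<le> ereal (h m)" by simp
  qed
  have lnlim: "filterlim (\<lambda>m::nat. ln (real m)) at_infinity sequentially"
    by (rule filterlim_at_top_imp_at_infinity, rule filterlim_compose[OF ln_at_top filterlim_real_sequentially])
  have "(h \<longlongrightarrow> real k + 0) sequentially"
    unfolding h_def by (intro tendsto_add tendsto_const tendsto_divide_0[OF tendsto_const lnlim])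
  then have "((\<lambda>m. ereal (h m)) \<longlongrightarrow> ereal (real k)) sequentially" by (simp add: lim_ereal)
  then have "limsup (\<lambda>m. ereal (h m)) = ereal (real k)" by (intro lim_imp_Limsup) simp_all
  moreover have "limsup (\<lambda>m. ereal (ln (real (D m)) / ln (real m))) \<le> limsup (\<lambda>m. ereal (h m))"
    by (rule Limsup_mono[OF ev])
  ultimately show ?thesis by simp
qed

lemma limsup_lower:
  fixes D :: "nat \<Rightarrow> nat" and k :: nat
  assumes k1: "1 \<le> k" and bd: "\<And>m. (m div k + 1) ^ k \<le> D m"
  shows "ereal (real k) \<le> limsup (\<lambda>m. ereal (ln (real (D m)) / ln (real m)))"
proof -
  define h where "h m = real k - real k * ln (real k) / ln (real m)" for m :: nat
  have ev: "eventually (\<lambda>m. ereal (h m) \<le> ereal (ln (real (D m)) / ln (real m))) sequentially"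
    unfolding eventually_sequentially
  proof (intro exI[of _ 2] allI impI)
    fix m :: nat assume m2: "2 \<le> m"
    have lm: "0 < ln (real m)" using ln_bound_aux[OF m2] .
    have q1: "real m / real k \<le> real (m div k + 1)"
    proof -
      have e: "m = k * (m div k) + m mod k" by simp
      moreover have "m mod k < k" using k1 by simp
      ultimately have "m \<le> k * (m div k) + k" by linarith
      then have "m \<le> (m div k + 1) * k" by (simp add: algebra_simps)
      then have "real m \<le> real (m div k + 1) * real k" by (metis of_nat_le_iff of_nat_mult)
      then show ?thesis using k1 by (simp add: divide_le_eq)
    qed
    have mk: "0 < real m / real k" using m2 k1 by simp
    have "real k * (ln (real m) - ln (real k)) = real k * ln (real m / real k)"
      using m2 k1 by (simp add: ln_div)
    also have "\<dots> \<le> real k * ln (real (m div k + 1))"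
      using q1 mk by (intro mult_left_mono) (simp_all add: ln_le_cancel_iff)
    also have "\<dots> = ln (real ((m div k + 1) ^ k))" by (simp add: ln_realpow)
    also have "\<dots> \<le> ln (real (D m))"
    proof -
      have "0 < real ((m div k + 1) ^ k)" by simp
      moreover have "real ((m div k + 1) ^ k) \<le> real (D m)" using bd[of m] by (metis of_nat_le_iff)
      ultimately have "0 < real (D m)" by linarith
      then show ?thesis using \<open>0 < real ((m div k + 1) ^ k)\<close> \<open>real ((m div k + 1) ^ k) \<le> real (D m)\<close>
        by (simp only: ln_le_cancel_iff)
    qed
    finally have "real k * (ln (real m) - ln (real k)) \<le> ln (real (D m))" .
    then have "real k * (ln (real m) - ln (real k)) / ln (real m) \<le> ln (real (D m)) / ln (real m)"
      using lm by (intro divide_right_mono) simp_all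
    moreover have "h m = real k * (ln (real m) - ln (real k)) / ln (real m)"
      using lm by (simp add: h_def field_simps)
    ultimately show "ereal (h m) \<le> ereal (ln (real (D m)) / ln (real m))" by simp
  qed
  have lnlim: "filterlim (\<lambda>m::nat. ln (real m)) at_infinity sequentially"
    by (rule filterlim_at_top_imp_at_infinity, rule filterlim_compose[OF ln_at_top filterlim_real_sequentially])
  have "(h \<longlongrightarrow> real k - 0) sequentially"
    unfolding h_def by (intro tendsto_diff tendsto_const tendsto_divide_0[OF tendsto_const lnlim])
  then have "((\<lambda>m. ereal (h m)) \<longlongrightarrow> ereal (real k)) sequentially" by (simp add: lim_ereal)
  then have "limsup (\<lambda>m. ereal (h m)) = ereal (real k)" by (intro lim_imp_Limsup) simp_all
  moreover have "limsup (\<lambda>m. ereal (h m)) \<le> limsup (\<lambda>m. ereal (ln (real (D m)) / ln (real m)))"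
    by (rule Limsup_mono[OF ev])
  ultimately show ?thesis by simp
qed

theorem proposition2p2:
  fixes \<iota> :: "'k::field \<Rightarrow> 'r::idom" and \<sigma> :: "'r \<Rightarrow> 'r" and H J :: "'r set" and d :: nat
  assumes "alg_closed TYPE('k)"
    and "kalg_hom \<iota>"
    and "noetherian_ring TYPE('r)"
    and "trdeg_eq (frac_emb \<iota>) d"
    and "k_aut \<iota> \<sigma>"
    and "locally_algebraic \<iota> \<sigma>"
    and "is_ideal H" and "is_ideal J"
    and "\<forall>n. BR_I \<sigma> H J n \<noteq> {0}"
  shows "GKdim (sl_scale \<iota>) (sl_mult \<sigma>) sl_one (BR_alg \<sigma> H J) = ereal (real d + 1)"
proof -
  note h\<iota> = assms(2) and tr = assms(4) and aut = assms(5) and la = assms(6) and BRne = assms(9)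
  interpret VF: vector_space "sl_scale \<iota>" by (rule vs_sl[OF h\<iota>])
  define Dm where "Dm F m = VF.dim (pow_space (sl_scale \<iota>) (sl_mult \<sigma>) sl_one (VF.span (insert sl_one F)) m)"
    for F m
  have BRsl: "BR_alg \<sigma> H J \<subseteq> skew_laurent" by (auto simp: BR_alg_def)
  have up: "limsup (\<lambda>m. ereal (ln (real (Dm F m)) / ln (real m))) \<le> ereal (real d + 1)"
    if F: "F \<in> {F. finite F \<and> F \<subseteq> BR_alg \<sigma> H J}" for F
  proof -
    have fF: "finite F" and Fsl: "F \<subseteq> skew_laurent" using F BRsl by auto
    obtain c where c: "\<forall>m. \<exists>B. finite B \<and> VF.independent B
     \<and> pow_space (sl_scale \<iota>) (sl_mult \<sigma>) sl_one (VF.span (insert sl_one F)) m \<subseteq> VF.span B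
     \<and> card B = Dm F m \<and> card B \<le> c * (m + 1) ^ (d + 1)"
      using upper_main[OF h\<iota> aut la tr fF Fsl] unfolding Dm_def by blast
    have "Dm F m \<le> c * (m + 1) ^ (d + 1)" for m using c by (metis)
    from limsup_upper[of "Dm F" c "d + 1", OF this] show ?thesis by (simp add: add.commute)
  qed
  have le: "GKdim (sl_scale \<iota>) (sl_mult \<sigma>) sl_one (BR_alg \<sigma> H J) \<le> ereal (real d + 1)"
    unfolding GKdim_def by (rule SUP_least) (use up in \<open>simp add: Dm_def\<close>)
  obtain F0 where fF0: "finite F0" and F0BR: "F0 \<subseteq> BR_alg \<sigma> H J"
    and low: "\<forall>m. \<exists>T. T \<subseteq> pow_space (sl_scale \<iota>) (sl_mult \<sigma>) sl_one (VF.span (insert sl_one F0)) m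
     \<and> VF.independent T \<and> card T = (m div (d + 1) + 1) ^ (d + 1)"
    using lower_main[OF h\<iota> aut tr BRne] by blast
  obtain c0 where c0: "\<forall>m. \<exists>B. finite B \<and> VF.independent B
     \<and> pow_space (sl_scale \<iota>) (sl_mult \<sigma>) sl_one (VF.span (insert sl_one F0)) m \<subseteq> VF.span B
     \<and> card B = Dm F0 m \<and> card B \<le> c0 * (m + 1) ^ (d + 1)"
    using upper_main[OF h\<iota> aut la tr fF0] F0BR BRsl unfolding Dm_def by blast
  have lowD: "(m div (d + 1) + 1) ^ (d + 1) \<le> Dm F0 m" for m
  proof -
    obtain T where T: "T \<subseteq> pow_space (sl_scale \<iota>) (sl_mult \<sigma>) sl_one (VF.span (insert sl_one F0)) m"
      "VF.independent T" "card T = (m div (d + 1) + 1) ^ (d + 1)" using low by blast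
    obtain B where B: "finite B" "pow_space (sl_scale \<iota>) (sl_mult \<sigma>) sl_one (VF.span (insert sl_one F0)) m \<subseteq> VF.span B"
      "card B = Dm F0 m" using c0 by blast
    have "card T \<le> card B" using VF.independent_span_bound[OF B(1) T(2)] T(1) B(2) by blast
    then show ?thesis using T(3) B(3) by simp
  qed
  have "ereal (real (d + 1)) \<le> limsup (\<lambda>m. ereal (ln (real (Dm F0 m)) / ln (real m)))"
  proof (rule limsup_lower)
    show "1 \<le> d + 1" by simp
    show "(m div (d + 1) + 1) ^ (d + 1) \<le> Dm F0 m" for m by (rule lowD)
  qed
  also have "\<dots> \<le> GKdim (sl_scale \<iota>) (sl_mult \<sigma>) sl_one (BR_alg \<sigma> H J)"
    unfolding GKdim_def Dm_def by (rule SUP_upper) (simp add: fF0 F0BR)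
  finally have ge: "ereal (real d + 1) \<le> GKdim (sl_scale \<iota>) (sl_mult \<sigma>) sl_one (BR_alg \<sigma> H J)" by (simp add: add.commute)
  show ?thesis using le ge by (rule antisym)
qed

end
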